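(* Let $X$ be a quasi-tree with basepoint $x_0$, and let $(T_X,d^* )$ be its end-approximating tree with basepoint $[x_0]$. For every $a>1$ there exists a visual metric $d_{\partial X}$ on $\partial X$ with visual parameter $a$ such that $(\partial X,d_{\partial X})$ is isometric to $(\partial T_X,d_{\partial T_X})$, where $d_{\partial T_X}(p,q)=a^{-(p,q)_{[x_0]}}$ is the standard visual metric on $\partial T_X$ with parameter $a$.
   Context: A quasi-tree is a geodesic metric space quasi-isometric to a simplicial tree. End-approximating tree: with $(x,y)_{x_0}=\frac12(d(x_0,x)+d(x_0,y)-d(x,y))$, let $(x,y)'_{x_0}=\sup\min_{1\leqslant i\leqslant n-1}(x_i,x_{i+1})_{x_0}$, the supremum over all finite sequences $x=x_1,\ldots,x_n=y$ in $X$, and $d'(x,y)=d(x_0,x)+d(x_0,y)-2(x,y)'_{x_0}$; $T_X=X/\sim$ with $x\sim y$ iff $d'(x,y)=0$, and $d^*([x],[y])=d'(x,y)$ (it is an $\mathbb{R}$-tree). For a hyperbolic metric space $Y$ with basepoint $y_0$: a sequence $(x_n)$ converges to infinity if $(x_i,x_j)_{y_0}\to\infty$ as $i,j\to\infty$; two such sequences $(x_n),(y_n)$ are equivalent if $\liminf_{i,j\to\infty}(x_i,y_j)_{y_0}=\infty$; the sequential boundary $\partial Y$ is the set of equivalence classes. For $p,q\in\partial Y$, $(p,q)_{y_0}=\sup\{\liminf_{i,j\to\infty}(x_i,y_j)_{y_0}: (x_i)\in p,\ (y_j)\in q\}$. A metric $d_{\partial Y}$ on $\partial Y$ is a visual metric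 with parameter $a>1$ if there is $K\geqslant 1$ with $\frac1K a^{-(p,q)_{y_0}}\leqslant d_{\partial Y}(p,q)\leqslant K a^{-(p,q)_{y_0}}$ for all $p,q\in\partial Y$. *)

theory Defs
  imports "HOL-Analysis.Analysis"
begin

definition geodesic_space :: "'a set \<Rightarrow> ('a \<Rightarrow> 'a \<Rightarrow> real) \<Rightarrow> bool" where
  "geodesic_space X d \<longleftrightarrow>
     (\<forall>x\<in>X. \<forall>y\<in>X. \<exists>\<gamma> :: real \<Rightarrow> 'a. \<gamma> 0 = x \<and> \<gamma> (d x y) = y \<and>
        (\<forall>t\<in>{0..d x y}. \<gamma> t \<in> X) \<and>
        (\<forall>s\<in>{0..d x y}. \<forall>t\<in>{0..d x y}. d (\<gamma> s) (\<gamma> t) = \<bar>s - t\<bar>))"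

definition quasi_isometric ::
  "'a set \<Rightarrow> ('a \<Rightarrow> 'a \<Rightarrow> real) \<Rightarrow> 'b set \<Rightarrow> ('b \<Rightarrow> 'b \<Rightarrow> real) \<Rightarrow> bool" where
  "quasi_isometric X d Y e \<longleftrightarrow>
     (\<exists>f. f ` X \<subseteq> Y \<and> (\<exists>lam C. lam \<ge> 1 \<and> C \<ge> 0 \<and>
        (\<forall>x\<in>X. \<forall>y\<in>X. d x y / lam - C \<le> e (f x) (f y) \<and> e (f x) (f y) \<le> lam * d x y + C) \<and>
        (\<forall>z\<in>Y. \<exists>x\<in>X. e z (f x) \<le> C)))"

definition isometric_spaces ::
  "'a set \<Rightarrow> ('a \<Rightarrow> 'a \<Rightarrow> real) \<Rightarrow> 'b set \<Rightarrow> ('b \<Rightarrow> 'b \<Rightarrow> real) \<Rightarrow> bool" where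
  "isometric_spaces A dA B dB \<longleftrightarrow>
     (\<exists>\<phi>. bij_betw \<phi> A B \<and> (\<forall>p\<in>A. \<forall>q\<in>A. dB (\<phi> p) (\<phi> q) = dA p q))"

definition is_walk :: "('b \<Rightarrow> 'b \<Rightarrow> bool) \<Rightarrow> 'b list \<Rightarrow> 'b \<Rightarrow> 'b \<Rightarrow> bool" where
  "is_walk E xs x y \<longleftrightarrow> xs \<noteq> [] \<and> hd xs = x \<and> last xs = y \<and>
     (\<forall>i < length xs - 1. E (xs ! i) (xs ! Suc i))"

definition graph_dist :: "('b \<Rightarrow> 'b \<Rightarrow> bool) \<Rightarrow> 'b \<Rightarrow> 'b \<Rightarrow> real" where
  "graph_dist E x y = real (LEAST n. \<exists>xs. is_walk E xs x y \<and> length xs = Suc n)"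

definition simplicial_tree :: "'b set \<Rightarrow> ('b \<Rightarrow> 'b \<Rightarrow> bool) \<Rightarrow> bool" where
  "simplicial_tree V E \<longleftrightarrow> V \<noteq> {} \<and>
     (\<forall>u v. E u v \<longrightarrow> u \<in> V \<and> v \<in> V) \<and>
     (\<forall>u v. E u v \<longrightarrow> E v u) \<and> (\<forall>u. \<not> E u u) \<and>
     (\<forall>u\<in>V. \<forall>v\<in>V. \<exists>xs. is_walk E xs u v) \<and>
     (\<forall>u\<in>V. \<forall>v\<in>V. \<forall>xs ys. is_walk E xs u v \<and> distinct xs \<and> is_walk E ys u v \<and> distinct ys
        \<longrightarrow> xs = ys)"

definition gromov_product :: "('a \<Rightarrow> 'a \<Rightarrow> real) \<Rightarrow> 'a \<Rightarrow> 'a \<Rightarrow> 'a \<Rightarrow> real" where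
  "gromov_product d w x y = (d w x + d w y - d x y) / 2"

definition chain_product :: "'a set \<Rightarrow> ('a \<Rightarrow> 'a \<Rightarrow> real) \<Rightarrow> 'a \<Rightarrow> 'a \<Rightarrow> 'a \<Rightarrow> real" where
  "chain_product X d w x y =
     Sup {Min ((\<lambda>i. gromov_product d w (xs ! i) (xs ! Suc i)) ` {..<length xs - 1}) | xs.
            length xs \<ge> 2 \<and> hd xs = x \<and> last xs = y \<and> set xs \<subseteq> X}"

definition ea_dist :: "'a set \<Rightarrow> ('a \<Rightarrow> 'a \<Rightarrow> real) \<Rightarrow> 'a \<Rightarrow> 'a \<Rightarrow> 'a \<Rightarrow> real" where
  "ea_dist X d w x y = d w x + d w y - 2 * chain_product X d w x y"

definition ea_class :: "'a set \<Rightarrow> ('a \<Rightarrow> 'a \<Rightarrow> real) \<Rightarrow> 'a \<Rightarrow> 'a \<Rightarrow> 'a set" where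
  "ea_class X d w x = {y \<in> X. ea_dist X d w x y = 0}"

definition ea_tree :: "'a set \<Rightarrow> ('a \<Rightarrow> 'a \<Rightarrow> real) \<Rightarrow> 'a \<Rightarrow> 'a set set" where
  "ea_tree X d w = ea_class X d w ` X"

definition ea_metric :: "'a set \<Rightarrow> ('a \<Rightarrow> 'a \<Rightarrow> real) \<Rightarrow> 'a \<Rightarrow> 'a set \<Rightarrow> 'a set \<Rightarrow> real" where
  "ea_metric X d w P Q = ea_dist X d w (SOME x. x \<in> P) (SOME y. y \<in> Q)"

definition conv_infty :: "'a set \<Rightarrow> ('a \<Rightarrow> 'a \<Rightarrow> real) \<Rightarrow> 'a \<Rightarrow> (nat \<Rightarrow> 'a) \<Rightarrow> bool" where
  "conv_infty S d w xs \<longleftrightarrow> (\<forall>n. xs n \<in> S) \<and>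
     (\<forall>M. \<exists>N. \<forall>i\<ge>N. \<forall>j\<ge>N. gromov_product d w (xs i) (xs j) \<ge> M)"

definition seq_equiv :: "('a \<Rightarrow> 'a \<Rightarrow> real) \<Rightarrow> 'a \<Rightarrow> (nat \<Rightarrow> 'a) \<Rightarrow> (nat \<Rightarrow> 'a) \<Rightarrow> bool" where
  "seq_equiv d w xs ys \<longleftrightarrow>
     Liminf (sequentially \<times>\<^sub>F sequentially) (\<lambda>(i, j). ereal (gromov_product d w (xs i) (ys j))) = \<infinity>"

definition seq_boundary :: "'a set \<Rightarrow> ('a \<Rightarrow> 'a \<Rightarrow> real) \<Rightarrow> 'a \<Rightarrow> (nat \<Rightarrow> 'a) set set" where
  "seq_boundary S d w =
     {{ys. conv_infty S d w ys \<and> seq_equiv d w xs ys} | xs. conv_infty S d w xs}"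

definition boundary_product ::
  "('a \<Rightarrow> 'a \<Rightarrow> real) \<Rightarrow> 'a \<Rightarrow> (nat \<Rightarrow> 'a) set \<Rightarrow> (nat \<Rightarrow> 'a) set \<Rightarrow> ereal" where
  "boundary_product d w p q =
     Sup {Liminf (sequentially \<times>\<^sub>F sequentially) (\<lambda>(i, j). ereal (gromov_product d w (xs i) (ys j)))
          | xs ys. xs \<in> p \<and> ys \<in> q}"

definition vis_pow :: "real \<Rightarrow> ereal \<Rightarrow> real" where
  "vis_pow a r = (if r = \<infinity> then 0 else a powr (- real_of_ereal r))"

definition visual_metric ::
  "'a set \<Rightarrow> ('a \<Rightarrow> 'a \<Rightarrow> real) \<Rightarrow> 'a \<Rightarrow> real \<Rightarrow> ((nat \<Rightarrow> 'a) set \<Rightarrow> (nat \<Rightarrow> 'a) set \<Rightarrow> real) \<Rightarrow> bool" where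
  "visual_metric S d w a dB \<longleftrightarrow> Metric_space (seq_boundary S d w) dB \<and>
     (\<exists>K\<ge>1. \<forall>p\<in>seq_boundary S d w. \<forall>q\<in>seq_boundary S d w.
        vis_pow a (boundary_product d w p q) / K \<le> dB p q \<and>
        dB p q \<le> K * vis_pow a (boundary_product d w p q))"

end

theory Submission
  imports Defs
begin

lemma succ_nth: "successively P xs \<longleftrightarrow> (\<forall>i < length xs - 1. P (xs!i) (xs!Suc i))"
proof (induction xs rule: induct_list012)
  case (3 x y zs)
  show ?case
  proof
    assume "successively P (x # y # zs)"
    then have "P x y" "successively P (y#zs)" by auto
    with 3(2) have h: "\<forall>i<length (y # zs) - 1. P ((y # zs) ! i) ((y # zs) ! Suc i)" by auto
    show "\<forall>i<length (x # y # zs) - 1. P ((x # y # zs) ! i) ((x # y # zs) ! Suc i)"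
    proof (intro allI impI)
      fix i assume i: "i < length (x # y # zs) - 1"
      show "P ((x # y # zs) ! i) ((x # y # zs) ! Suc i)"
      proof (cases i)
        case 0 then show ?thesis using \<open>P x y\<close> by simp
      next
        case (Suc j) then show ?thesis using h[rule_format, of j] i by simp
      qed
    qed
  next
    assume h: "\<forall>i<length (x # y # zs) - 1. P ((x # y # zs) ! i) ((x # y # zs) ! Suc i)"
    then have "P x y" by force
    moreover have "\<forall>i<length (y # zs) - 1. P ((y # zs) ! i) ((y # zs) ! Suc i)"
    proof (intro allI impI)
      fix i assume "i < length (y # zs) - 1"
      then show "P ((y # zs) ! i) ((y # zs) ! Suc i)" using h[rule_format, of "Suc i"] by auto
    qed
    ultimately show "successively P (x # y # zs)" using 3(2) by auto
  qed
qed auto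

lemma is_walk_alt: "is_walk E xs x y \<longleftrightarrow> xs \<noteq> [] \<and> hd xs = x \<and> last xs = y \<and> successively E xs"
  unfolding is_walk_def succ_nth by auto

lemma walk_shorten:
  assumes "is_walk E xs u v"
  shows "\<exists>ys. is_walk E ys u v \<and> distinct ys \<and> length ys \<le> length xs"
  using assms
proof (induction "length xs" arbitrary: xs rule: less_induct)
  case less
  show ?case
  proof (cases "distinct xs")
    case True then show ?thesis using less.prems by blast
  next
    case False
    then obtain as bs cs y where xs: "xs = as@[y]@bs@[y]@cs" using not_distinct_decomp by blast
    let ?ys = "as@[y]@cs"
    have s1: "successively E ((as@[y]@bs) @ (y#cs))" using less.prems unfolding is_walk_alt xs by simp
    then have s2: "successively E (y#cs)" by (simp only: successively_append_iff)
    have s3: "successively E (as@[y])" using s1 by (simp only: successively_append_iff append_assoc) simp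
    have "successively E ((as@[y]) @ cs)"
      using s2 s3 unfolding successively_append_iff by (cases cs) auto
    then have "is_walk E ?ys u v"
      using less.prems unfolding is_walk_alt xs
      by (cases "as = []"; cases "cs = []") (auto simp: hd_append)
    moreover have "length ?ys < length xs" using xs by simp
    ultimately show ?thesis using less.hyps by fastforce
  qed
qed

fun cpl :: "'a list \<Rightarrow> 'a list \<Rightarrow> nat" where
  "cpl (a#as) (b#bs) = (if a = b then Suc (cpl as bs) else 0)"
| "cpl _ _ = 0"

lemma cpl_le1: "cpl xs ys \<le> length xs"
  by (induction xs ys rule: cpl.induct) auto

lemma cpl_le2: "cpl xs ys \<le> length ys"
  by (induction xs ys rule: cpl.induct) auto

lemma cpl_nth: "i < cpl xs ys \<Longrightarrow> xs!i = ys!i"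
proof (induction xs ys arbitrary: i rule: cpl.induct)
  case (1 a as b bs)
  then show ?case by (cases i) (auto split: if_splits)
qed auto

lemma cpl_neq: "cpl xs ys < length xs \<Longrightarrow> cpl xs ys < length ys \<Longrightarrow> xs ! cpl xs ys \<noteq> ys ! cpl xs ys"
  by (induction xs ys rule: cpl.induct) auto

lemma cpl_sym: "cpl xs ys = cpl ys xs"
  by (induction xs ys rule: cpl.induct) auto

lemma cpl_min: "min (cpl xs ys) (cpl ys zs) \<le> cpl xs zs"
proof (induction xs arbitrary: ys zs)
  case (Cons a as)
  then show ?case by (cases ys; cases zs) auto
qed auto

lemma cpl_pos: "xs \<noteq> [] \<Longrightarrow> ys \<noteq> [] \<Longrightarrow> hd xs = hd ys \<Longrightarrow> 1 \<le> cpl xs ys"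
  by (cases xs; cases ys) auto

lemma walk_take: "is_walk E xs u v \<Longrightarrow> i < length xs \<Longrightarrow> is_walk E (take (Suc i) xs) u (xs!i)"
proof -
  assume w: "is_walk E xs u v" and i: "i < length xs"
  have "successively E (take (Suc i) xs)" using w unfolding is_walk_alt
    by (metis append_take_drop_id successively_append_iff)
  moreover have "hd (take (Suc i) xs) = hd xs" using i by (cases xs) auto
  moreover have "last (take (Suc i) xs) = xs!i" using i by (simp add: take_Suc_conv_app_nth)
  ultimately show ?thesis using w i unfolding is_walk_alt by auto
qed

lemma succ_drop: "successively E xs \<Longrightarrow> successively E (drop n xs)"
  by (metis append_take_drop_id successively_append_iff)

context
  fixes V :: "'b set" and E :: "'b \<Rightarrow> 'b \<Rightarrow> bool"
  assumes tree: "simplicial_tree V E"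
begin

lemma E_V: "E u v \<Longrightarrow> u \<in> V \<and> v \<in> V"
  using tree unfolding simplicial_tree_def by blast

lemma E_sym: "E u v \<Longrightarrow> E v u"
  using tree unfolding simplicial_tree_def by blast

lemma succ_V: "successively E xs \<Longrightarrow> xs \<noteq> [] \<Longrightarrow> hd xs \<in> V \<Longrightarrow> set xs \<subseteq> V"
  by (induction xs rule: induct_list012) (auto dest: E_V)

lemma walk_V: "is_walk E xs u v \<Longrightarrow> u \<in> V \<Longrightarrow> set xs \<subseteq> V"
  using succ_V unfolding is_walk_alt by blast

lemma walk_last_V: "is_walk E xs u v \<Longrightarrow> u \<in> V \<Longrightarrow> v \<in> V"
  using walk_V unfolding is_walk_alt by (metis last_in_set subsetD)

lemma walk_unique: "u \<in> V \<Longrightarrow> v \<in> V \<Longrightarrow> is_walk E xs u v \<Longrightarrow> distinct xs \<Longrightarrow>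
   is_walk E ys u v \<Longrightarrow> distinct ys \<Longrightarrow> xs = ys"
  using tree unfolding simplicial_tree_def by blast

lemma dist_walk: "u \<in> V \<Longrightarrow> is_walk E xs u v \<Longrightarrow> distinct xs \<Longrightarrow> graph_dist E u v = real (length xs - 1)"
proof -
  assume u: "u \<in> V" and w: "is_walk E xs u v" and dx: "distinct xs"
  have v: "v \<in> V" using walk_last_V[OF w u] .
  let ?P = "\<lambda>n. \<exists>ys. is_walk E ys u v \<and> length ys = Suc n"
  have ne: "xs \<noteq> []" using w unfolding is_walk_def by auto
  have P1: "?P (length xs - 1)" using w ne by (intro exI[of _ xs]) auto
  then have "?P (Least ?P)" by (rule LeastI)
  then obtain ys where ys: "is_walk E ys u v" "length ys = Suc (Least ?P)" by blast
  obtain zs where zs: "is_walk E zs u v" "distinct zs" "length zs \<le> length ys"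
    using walk_shorten[OF ys(1)] by blast
  have "zs = xs" using walk_unique[OF u v zs(1,2) w dx] .
  moreover have "Least ?P \<le> length xs - 1" using P1 by (rule Least_le)
  ultimately have "Least ?P = length xs - 1" using zs ys by simp
  then show ?thesis unfolding graph_dist_def by simp
qed

lemma exists_dwalk: "u \<in> V \<Longrightarrow> v \<in> V \<Longrightarrow> \<exists>xs. is_walk E xs u v \<and> distinct xs"
proof -
  assume "u \<in> V" "v \<in> V"
  then obtain xs where "is_walk E xs u v" using tree unfolding simplicial_tree_def by blast
  from walk_shorten[OF this] show ?thesis by blast
qed

definition tp where "tp u v = (SOME xs. is_walk E xs u v \<and> distinct xs)"

lemma tp: "u \<in> V \<Longrightarrow> v \<in> V \<Longrightarrow> is_walk E (tp u v) u v \<and> distinct (tp u v)"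
  unfolding tp_def using exists_dwalk by (rule someI_ex)

lemma tp_dist:
  assumes o: "w0 \<in> V" and u: "u \<in> V" and v: "v \<in> V"
  defines "a \<equiv> tp w0 u" and "b \<equiv> tp w0 v"
  defines "k \<equiv> cpl a b"
  shows "graph_dist E u v = real (length a + length b - 2*k)" "1 \<le> k" "k \<le> length a" "k \<le> length b"
proof -
  have wa: "is_walk E a w0 u" and da: "distinct a" using tp[OF o u] unfolding a_def by auto
  have wb: "is_walk E b w0 v" and db: "distinct b" using tp[OF o v] unfolding b_def by auto
  have ane: "a \<noteq> []" "hd a = w0" "last a = u" "successively E a" using wa unfolding is_walk_alt by auto
  have bne: "b \<noteq> []" "hd b = w0" "last b = v" "successively E b" using wb unfolding is_walk_alt by auto
  show k1: "1 \<le> k" unfolding k_def using cpl_pos ane bne by metis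
  show ka: "k \<le> length a" unfolding k_def by (rule cpl_le1)
  show kb: "k \<le> length b" unfolding k_def by (rule cpl_le2)
  have ab: "a!(k-1) = b!(k-1)" unfolding k_def by (rule cpl_nth) (use k1 k_def in auto)
  define W where "W = rev (drop (k-1) a) @ drop k b"
  have dne: "drop (k-1) a \<noteq> []" using ka k1 by simp
  have hd1: "hd (drop (k-1) a) = a!(k-1)" using ka k1 by (simp add: hd_drop_conv_nth)
  have s1: "successively E (rev (drop (k-1) a))"
    using succ_drop[OF ane(4)] E_sym by (auto intro: successively_mono)
  have s2: "successively E (drop k b)" using succ_drop[OF bne(4)] .
  have junc: "E (a!(k-1)) (hd (drop k b))" if "drop k b \<noteq> []"
  proof -
    have "k < length b" using that by simp
    then have "k - 1 < length b - 1" using k1 by simp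
    then have "E (b!(k-1)) (b!Suc (k-1))" using bne(4) unfolding succ_nth by blast
    then show ?thesis using ab k1 \<open>k < length b\<close> by (simp add: hd_drop_conv_nth)
  qed
  have "successively E W" unfolding W_def successively_append_iff
    using s1 s2 junc dne hd1 by (auto simp: last_rev)
  moreover have "hd W = u" unfolding W_def using dne ane(3) by (simp add: hd_append hd_rev)
  moreover have "last W = v"
  proof (cases "drop k b = []")
    case True
    then have "k = length b" using kb by simp
    then have "b!(k-1) = v" using bne k1 by (simp add: last_conv_nth)
    then show ?thesis using True unfolding W_def using dne hd1 ab by (simp add: last_rev)
  next
    case False then show ?thesis unfolding W_def using bne(3) by simp
  qed
  ultimately have wW: "is_walk E W u v" unfolding is_walk_alt W_def using dne by auto
  have disj: "set (drop (k-1) a) \<inter> set (drop k b) = {}"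
  proof (rule ccontr)
    assume "set (drop (k-1) a) \<inter> set (drop k b) \<noteq> {}"
    then obtain z where z1: "z \<in> set (drop (k-1) a)" and z2: "z \<in> set (drop k b)" by blast
    from z1 obtain i' where i': "i' < length (drop (k-1) a)" "drop (k-1) a ! i' = z"
      by (auto simp: in_set_conv_nth)
    define i where "i = k - 1 + i'"
    have i: "i < length a" "k - 1 \<le> i" "a!i = z" using i' ka unfolding i_def by auto
    from z2 obtain j' where j': "j' < length (drop k b)" "drop k b ! j' = z"
      by (auto simp: in_set_conv_nth)
    define j where "j = k + j'"
    have j: "j < length b" "k \<le> j" "b!j = z" using j' kb unfolding j_def by auto
    have zV: "z \<in> V" using walk_V[OF wa o] i by auto
    have w1: "is_walk E (take (Suc i) a) w0 z" using walk_take[OF wa i(1)] i by simp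
    have w2: "is_walk E (take (Suc j) b) w0 z" using walk_take[OF wb j(1)] j by simp
    have eq: "take (Suc i) a = take (Suc j) b"
      using walk_unique[OF o zV w1 _ w2] da db by simp
    then have "length (take (Suc i) a) = length (take (Suc j) b)" by simp
    then have "Suc i = Suc j" using i j by simp
    then have ij: "i = j" by simp
    have "a!k = take (Suc i) a ! k" using i j ij by simp
    also have "\<dots> = take (Suc j) b ! k" using eq by simp
    also have "\<dots> = b!k" using j by simp
    finally have "a!k = b!k" .
    moreover have "k < length a" "k < length b" using i j ij by auto
    ultimately show False using cpl_neq unfolding k_def by metis
  qed
  have "distinct W" unfolding W_def using da db disj by (simp add: distinct_drop)
  then have "graph_dist E u v = real (length W - 1)" using dist_walk[OF u wW] by simp
  moreover have "length W = (length a - (k-1)) + (length b - k)" unfolding W_def by simp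
  ultimately show "graph_dist E u v = real (length a + length b - 2*k)" using k1 ka kb by simp
qed

lemma gd_refl: "u \<in> V \<Longrightarrow> graph_dist E u u = 0"
  using dist_walk[of u "[u]" u] unfolding is_walk_def by simp

lemma tp_len: "w0 \<in> V \<Longrightarrow> u \<in> V \<Longrightarrow> graph_dist E w0 u = real (length (tp w0 u) - 1)"
  using tp dist_walk by blast

lemma tp_ne: "w0 \<in> V \<Longrightarrow> u \<in> V \<Longrightarrow> tp w0 u \<noteq> []"
  using tp unfolding is_walk_def by blast

lemma gd_sym: "u \<in> V \<Longrightarrow> v \<in> V \<Longrightarrow> graph_dist E u v = graph_dist E v u"
  using tp_dist(1)[of u u v] tp_dist(1)[of u v u] cpl_sym[of "tp u u" "tp u v"] by (simp add: add.commute)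

lemma gd_tri0: "w0 \<in> V \<Longrightarrow> u \<in> V \<Longrightarrow> v \<in> V \<Longrightarrow> graph_dist E u v \<le> graph_dist E w0 u + graph_dist E w0 v"
  using tp_dist[of w0 u v] tp_len[of w0 u] tp_len[of w0 v] tp_ne[of w0 u] tp_ne[of w0 v]
  by (simp add: of_nat_diff)

lemma gd_tri: "u \<in> V \<Longrightarrow> v \<in> V \<Longrightarrow> w \<in> V \<Longrightarrow> graph_dist E u w \<le> graph_dist E u v + graph_dist E v w"
  using gd_tri0[of v u w] gd_sym[of u v] by simp

lemma gp_cpl: "w0 \<in> V \<Longrightarrow> u \<in> V \<Longrightarrow> v \<in> V \<Longrightarrow>
   gromov_product (graph_dist E) w0 u v = real (cpl (tp w0 u) (tp w0 v)) - 1"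
  using tp_dist[of w0 u v] tp_len[of w0 u] tp_len[of w0 v] tp_ne[of w0 u] tp_ne[of w0 v]
  unfolding gromov_product_def by (simp add: of_nat_diff)

lemma gp_4pt: "w0 \<in> V \<Longrightarrow> u \<in> V \<Longrightarrow> v \<in> V \<Longrightarrow> w \<in> V \<Longrightarrow>
   min (gromov_product (graph_dist E) w0 u v) (gromov_product (graph_dist E) w0 v w) \<le> gromov_product (graph_dist E) w0 u w"
proof -
  assume a: "w0 \<in> V" "u \<in> V" "v \<in> V" "w \<in> V"
  have "min (cpl (tp w0 u) (tp w0 v)) (cpl (tp w0 v) (tp w0 w)) \<le> cpl (tp w0 u) (tp w0 w)" by (rule cpl_min)
  then have "min (real (cpl (tp w0 u) (tp w0 v))) (real (cpl (tp w0 v) (tp w0 w))) \<le> real (cpl (tp w0 u) (tp w0 w))"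
    by linarith
  then show ?thesis using gp_cpl a by simp
qed

end



definition geod :: "'a set \<Rightarrow> ('a \<Rightarrow> 'a \<Rightarrow> real) \<Rightarrow> (real \<Rightarrow> 'a) \<Rightarrow> 'a \<Rightarrow> 'a \<Rightarrow> bool" where
  "geod X d \<gamma> a b \<longleftrightarrow> \<gamma> 0 = a \<and> \<gamma> (d a b) = b \<and> (\<forall>t\<in>{0..d a b}. \<gamma> t \<in> X) \<and>
     (\<forall>s\<in>{0..d a b}. \<forall>t\<in>{0..d a b}. d (\<gamma> s) (\<gamma> t) = \<bar>s - t\<bar>)"

definition geo :: "'a set \<Rightarrow> ('a \<Rightarrow> 'a \<Rightarrow> real) \<Rightarrow> 'a \<Rightarrow> 'a \<Rightarrow> real \<Rightarrow> 'a" where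
  "geo X d a b = (SOME \<gamma>. geod X d \<gamma> a b)"

lemma geo: "geodesic_space X d \<Longrightarrow> a \<in> X \<Longrightarrow> b \<in> X \<Longrightarrow> geod X d (geo X d a b) a b"
proof -
  assume "geodesic_space X d" "a \<in> X" "b \<in> X"
  then have "\<exists>\<gamma>. geod X d \<gamma> a b" unfolding geodesic_space_def geod_def by blast
  then show ?thesis unfolding geo_def by (rule someI_ex)
qed

context
  fixes X :: "'a set" and d :: "'a \<Rightarrow> 'a \<Rightarrow> real" and V :: "'b set" and E :: "'b \<Rightarrow> 'b \<Rightarrow> bool"
    and f :: "'a \<Rightarrow> 'b" and lam C :: real
  assumes ms: "Metric_space X d" and gs: "geodesic_space X d" and tree: "simplicial_tree V E"
    and fX: "f ` X \<subseteq> V" and lam: "lam \<ge> 1" and C: "C \<ge> 0"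
    and qi: "\<And>x y. x \<in> X \<Longrightarrow> y \<in> X \<Longrightarrow> d x y / lam - C \<le> graph_dist E (f x) (f y) \<and>
                graph_dist E (f x) (f y) \<le> lam * d x y + C"
begin

abbreviation "gd \<equiv> graph_dist E"
abbreviation "gpV \<equiv> gromov_product (graph_dist E)"
abbreviation "gpX \<equiv> gromov_product d"

lemma fV: "x \<in> X \<Longrightarrow> f x \<in> V" using fX by blast

lemma dsym: "d x y = d y x" using Metric_space.commute[OF ms] .
lemma dtri: "x \<in> X \<Longrightarrow> y \<in> X \<Longrightarrow> z \<in> X \<Longrightarrow> d x z \<le> d x y + d y z"
  using Metric_space.triangle[OF ms] .
lemma dnn: "d x y \<ge> 0" using Metric_space.nonneg[OF ms] .
lemma d0: "x \<in> X \<Longrightarrow> d x x = 0" using Metric_space.zero[OF ms] by blast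

lemma gdsym: "x \<in> X \<Longrightarrow> y \<in> X \<Longrightarrow> gd (f x) (f y) = gd (f y) (f x)"
  using gd_sym[OF tree] fV by blast
lemma gdtri: "x \<in> X \<Longrightarrow> y \<in> X \<Longrightarrow> z \<in> X \<Longrightarrow> gd (f x) (f z) \<le> gd (f x) (f y) + gd (f y) (f z)"
  using gd_tri[OF tree] fV by blast
lemma gd0: "x \<in> X \<Longrightarrow> gd (f x) (f x) = 0"
  using gd_refl[OF tree] fV by blast
lemma g4: "w \<in> X \<Longrightarrow> x \<in> X \<Longrightarrow> y \<in> X \<Longrightarrow> z \<in> X \<Longrightarrow>
   min (gpV (f w) (f x) (f y)) (gpV (f w) (f y) (f z)) \<le> gpV (f w) (f x) (f z)"
  using gp_4pt[OF tree] fV by blast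

lemma gpV_sym: "w \<in> X \<Longrightarrow> x \<in> X \<Longrightarrow> y \<in> X \<Longrightarrow> gpV (f w) (f x) (f y) = gpV (f w) (f y) (f x)"
  unfolding gromov_product_def using gdsym by simp
lemma gpV_le: "w \<in> X \<Longrightarrow> x \<in> X \<Longrightarrow> y \<in> X \<Longrightarrow> gpV (f w) (f x) (f y) \<le> gd (f w) (f x)"
  unfolding gromov_product_def using gdtri[of w x y] by simp
lemma gpV_ge: "w \<in> X \<Longrightarrow> x \<in> X \<Longrightarrow> y \<in> X \<Longrightarrow> gpV (f w) (f x) (f y) \<ge> gd (f w) (f y) - gd (f x) (f y)"
  unfolding gromov_product_def using gdtri[of w x y] by simp
lemma gpV_self: "w \<in> X \<Longrightarrow> x \<in> X \<Longrightarrow> gpV (f w) (f x) (f x) = gd (f w) (f x)"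
  unfolding gromov_product_def using gd0 by simp
lemma gpV_nn: "w \<in> X \<Longrightarrow> x \<in> X \<Longrightarrow> y \<in> X \<Longrightarrow> gpV (f w) (f x) (f y) \<ge> 0"
  unfolding gromov_product_def using gdtri[of x w y] gdsym[of x w] by simp

lemma qlo: "x \<in> X \<Longrightarrow> y \<in> X \<Longrightarrow> d x y \<le> lam * (gd (f x) (f y) + C)"
proof -
  assume "x \<in> X" "y \<in> X"
  then have "d x y / lam - C \<le> gd (f x) (f y)" using qi by blast
  then show ?thesis using lam by (simp add: field_simps)
qed
lemma qhi: "x \<in> X \<Longrightarrow> y \<in> X \<Longrightarrow> gd (f x) (f y) \<le> lam * d x y + C"
  using qi by blast

definition "J = lam + C"
definition "D0 = lam^2 * (2*J + C) / 2 + J + C"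
definition "Dl = lam * (D0 + C + J + 1)"

lemma J0: "J \<ge> 0" unfolding J_def using lam C by simp

lemma geod_props:
  assumes "geod X d \<gamma> a b"
  shows "\<gamma> 0 = a" "\<gamma> (d a b) = b" "\<And>t. t\<in>{0..d a b} \<Longrightarrow> \<gamma> t \<in> X"
    "\<And>s t. s\<in>{0..d a b} \<Longrightarrow> t\<in>{0..d a b} \<Longrightarrow> d (\<gamma> s) (\<gamma> t) = \<bar>s - t\<bar>"
  using assms unfolding geod_def by auto

lemma geod_step:
  assumes g: "geod X d \<gamma> a b" and s: "s \<in> {0..d a b}" and t: "t \<in> {0..d a b}" and st: "\<bar>s - t\<bar> \<le> 1"
  shows "gd (f (\<gamma> s)) (f (\<gamma> t)) \<le> J"
proof -
  have "gd (f (\<gamma> s)) (f (\<gamma> t)) \<le> lam * d (\<gamma> s) (\<gamma> t) + C"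
    using qhi geod_props(3)[OF g] s t by blast
  also have "\<dots> = lam * \<bar>s - t\<bar> + C" using geod_props(4)[OF g s t] by simp
  also have "\<dots> \<le> lam * 1 + C" using st lam by (intro add_mono mult_left_mono) auto
  finally show ?thesis unfolding J_def by simp
qed

lemma coarse_fork:
  assumes p: "p \<in> X" and zX: "\<forall>k\<le>K. z k \<in> X" and z0: "z 0 = p"
    and st: "\<forall>k<K. gd (f (z k)) (f (z (Suc k))) \<le> J" and R0: "0 \<le> R" and RK: "R \<le> gd (f p) (f (z K))"
  shows "\<exists>k\<le>K. gd (f p) (f (z k)) \<le> R \<and> gpV (f p) (f (z k)) (f (z K)) \<ge> R - J"
proof -
  let ?P = "\<lambda>k. k \<le> K \<and> gpV (f p) (f (z k)) (f (z K)) \<ge> R - J"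
  have zK: "z K \<in> X" using zX by simp
  have "?P K" using gpV_self[OF p zK] RK J0 by simp
  then have Pk: "?P (Least ?P)" by (rule LeastI)
  define k0 where "k0 = Least ?P"
  have k0K: "k0 \<le> K" and gk0: "gpV (f p) (f (z k0)) (f (z K)) \<ge> R - J" using Pk unfolding k0_def by auto
  have zk0: "z k0 \<in> X" using zX k0K by simp
  show ?thesis
  proof (cases "k0 = 0")
    case True
    then show ?thesis using gk0 z0 gd0[OF p] R0 k0K by (intro exI[of _ k0]) auto
  next
    case False
    then have "\<not> ?P (k0 - 1)" unfolding k0_def by (intro not_less_Least) auto
    then have lt: "gpV (f p) (f (z (k0-1))) (f (z K)) < R - J" using k0K by auto
    have zk1: "z (k0-1) \<in> X" using zX k0K by simp
    have "min (gpV (f p) (f (z (k0-1))) (f (z k0))) (gpV (f p) (f (z k0)) (f (z K))) \<le> gpV (f p) (f (z (k0-1))) (f (z K))"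
      by (rule g4[OF p zk1 zk0 zK])
    then have a1: "gpV (f p) (f (z (k0-1))) (f (z k0)) < R - J" using lt gk0 by linarith
    have a2: "gpV (f p) (f (z (k0-1))) (f (z k0)) \<ge> gd (f p) (f (z k0)) - gd (f (z (k0-1))) (f (z k0))"
      by (rule gpV_ge[OF p zk1 zk0])
    have "k0 - 1 < K" using k0K False by simp
    then have "gd (f (z (k0-1))) (f (z (Suc (k0-1)))) \<le> J" using st by blast
    then have a3: "gd (f (z (k0-1))) (f (z k0)) \<le> J" using False by simp
    have "gd (f p) (f (z k0)) < R" using a1 a2 a3 by linarith
    then show ?thesis using gk0 k0K by (intro exI[of _ k0]) auto
  qed
qed

lemma morse:
  assumes x: "x \<in> X" and y: "y \<in> X" and g: "geod X d \<gamma> x y" and t: "t \<in> {0..d x y}"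
  shows "gpV (f (\<gamma> t)) (f x) (f y) \<le> D0"
proof -
  define L where "L = d x y"
  define p where "p = \<gamma> t"
  define Dv where "Dv = gpV (f p) (f x) (f y)"
  have inX: "\<And>s. s \<in> {0..L} \<Longrightarrow> \<gamma> s \<in> X" using geod_props(3)[OF g] unfolding L_def by blast
  have dg: "\<And>s s'. s \<in> {0..L} \<Longrightarrow> s' \<in> {0..L} \<Longrightarrow> d (\<gamma> s) (\<gamma> s') = \<bar>s - s'\<bar>"
    using geod_props(4)[OF g] unfolding L_def by blast
  have g0: "\<gamma> 0 = x" and gL: "\<gamma> L = y" using geod_props(1,2)[OF g] unfolding L_def by auto
  have tL: "0 \<le> t" "t \<le> L" using t unfolding L_def by auto
  have p: "p \<in> X" unfolding p_def using inX tL by auto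
  have Dv0: "0 \<le> Dv" unfolding Dv_def by (rule gpV_nn[OF p x y])
  have Dvx: "Dv \<le> gd (f p) (f x)" unfolding Dv_def by (rule gpV_le[OF p x y])
  have Dvy: "Dv \<le> gd (f p) (f y)" unfolding Dv_def using gpV_sym[OF p x y] gpV_le[OF p y x] by simp
  define s1 where "s1 = (\<lambda>k::nat. max (t - real k) 0)"
  define K1 where "K1 = nat \<lceil>t\<rceil>"
  have s1r: "s1 k \<in> {0..L}" for k unfolding s1_def using tL by auto
  have s1K: "s1 K1 = 0" unfolding s1_def K1_def using tL by auto
  have s10: "s1 0 = t" unfolding s1_def using tL by auto
  have st1: "\<forall>k<K1. gd (f (\<gamma> (s1 k))) (f (\<gamma> (s1 (Suc k)))) \<le> J"
  proof (intro allI impI)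
    fix k
    have "\<bar>s1 k - s1 (Suc k)\<bar> \<le> 1" unfolding s1_def by auto
    then show "gd (f (\<gamma> (s1 k))) (f (\<gamma> (s1 (Suc k)))) \<le> J"
      using geod_step[OF g] s1r unfolding L_def by blast
  qed
  obtain k1 where k1: "gd (f p) (f (\<gamma> (s1 k1))) \<le> Dv" "gpV (f p) (f (\<gamma> (s1 k1))) (f x) \<ge> Dv - J"
    using coarse_fork[of p K1 "\<lambda>k. \<gamma> (s1 k)" Dv] p inX s1r s10 st1 Dv0 Dvx s1K g0
    unfolding p_def by auto
  define s2 where "s2 = (\<lambda>k::nat. min (t + real k) L)"
  define K2 where "K2 = nat \<lceil>L - t\<rceil>"
  have s2r: "s2 k \<in> {0..L}" for k unfolding s2_def using tL by auto
  have s2K: "s2 K2 = L"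
  proof -
    have "L - t \<le> real K2" unfolding K2_def using tL by linarith
    then show ?thesis unfolding s2_def by simp
  qed
  have s20: "s2 0 = t" unfolding s2_def using tL by auto
  have st2: "\<forall>k<K2. gd (f (\<gamma> (s2 k))) (f (\<gamma> (s2 (Suc k)))) \<le> J"
  proof (intro allI impI)
    fix k
    have "\<bar>s2 k - s2 (Suc k)\<bar> \<le> 1" unfolding s2_def by auto
    then show "gd (f (\<gamma> (s2 k))) (f (\<gamma> (s2 (Suc k)))) \<le> J"
      using geod_step[OF g] s2r unfolding L_def by blast
  qed
  obtain k2 where k2: "gd (f p) (f (\<gamma> (s2 k2))) \<le> Dv" "gpV (f p) (f (\<gamma> (s2 k2))) (f y) \<ge> Dv - J"
    using coarse_fork[of p K2 "\<lambda>k. \<gamma> (s2 k)" Dv] p inX s2r s20 st2 Dv0 Dvy s2K gL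
    unfolding p_def by auto
  define sa where "sa = s1 k1"
  define sb where "sb = s2 k2"
  have sab: "sa \<le> t" "t \<le> sb" unfolding sa_def sb_def s1_def s2_def using tL by auto
  have a: "\<gamma> sa \<in> X" and b: "\<gamma> sb \<in> X" unfolding sa_def sb_def using inX s1r s2r by auto
  have "min (gpV (f p) (f (\<gamma> sa)) (f x)) (gpV (f p) (f x) (f y)) \<le> gpV (f p) (f (\<gamma> sa)) (f y)"
    by (rule g4[OF p a x y])
  then have e1: "gpV (f p) (f (\<gamma> sa)) (f y) \<ge> Dv - J" using k1(2) J0 unfolding sa_def Dv_def by linarith
  have "min (gpV (f p) (f (\<gamma> sa)) (f y)) (gpV (f p) (f y) (f (\<gamma> sb))) \<le> gpV (f p) (f (\<gamma> sa)) (f (\<gamma> sb))"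
    by (rule g4[OF p a y b])
  moreover have "gpV (f p) (f y) (f (\<gamma> sb)) \<ge> Dv - J" using k2(2) gpV_sym[OF p y b] unfolding sb_def by simp
  ultimately have e2: "gpV (f p) (f (\<gamma> sa)) (f (\<gamma> sb)) \<ge> Dv - J" using e1 by linarith
  have e3: "gd (f (\<gamma> sa)) (f (\<gamma> sb)) \<le> 2 * J"
    using e2 k1(1) k2(1) unfolding gromov_product_def sa_def sb_def by simp
  have "sb - sa = d (\<gamma> sa) (\<gamma> sb)" using dg[of sa sb] s1r s2r sab unfolding sa_def sb_def by simp
  also have "\<dots> \<le> lam * (gd (f (\<gamma> sa)) (f (\<gamma> sb)) + C)" by (rule qlo[OF a b])
  also have "\<dots> \<le> lam * (2 * J + C)" using e3 lam by (intro mult_left_mono) auto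
  finally have E1: "sb - sa \<le> lam * (2 * J + C)" .
  have "Dv - J \<le> gd (f p) (f (\<gamma> sa))" using k1(2) gpV_le[OF p a x] unfolding sa_def by linarith
  also have "\<dots> \<le> lam * d p (\<gamma> sa) + C" by (rule qhi[OF p a])
  also have "d p (\<gamma> sa) = t - sa" unfolding p_def using dg[of t sa] s1r sab tL unfolding sa_def by simp
  finally have E2: "Dv - J - C \<le> lam * (t - sa)" by simp
  have "Dv - J \<le> gd (f p) (f (\<gamma> sb))" using k2(2) gpV_le[OF p b y] unfolding sb_def by linarith
  also have "\<dots> \<le> lam * d p (\<gamma> sb) + C" by (rule qhi[OF p b])
  also have "d p (\<gamma> sb) = sb - t" unfolding p_def using dg[of t sb] s2r sab tL unfolding sb_def by simp
  finally have E3: "Dv - J - C \<le> lam * (sb - t)" by simp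
  have "2 * (Dv - J - C) \<le> lam * (sb - sa)" using E2 E3 by (simp add: algebra_simps)
  also have "\<dots> \<le> lam * (lam * (2 * J + C))" using E1 lam by (intro mult_left_mono) auto
  finally have "2 * (Dv - J - C) \<le> lam^2 * (2 * J + C)" by (simp add: power2_eq_square)
  then show ?thesis unfolding D0_def Dv_def p_def by simp
qed

lemma far_pt: "p \<in> X \<Longrightarrow> z \<in> X \<Longrightarrow> d p z > Dl \<Longrightarrow> gd (f p) (f z) > D0 + 1 + J"
proof -
  assume p: "p \<in> X" and z: "z \<in> X" and dz: "d p z > Dl"
  have "lam * (D0 + C + J + 1) < lam * (gd (f p) (f z) + C)"
    using qlo[OF p z] dz unfolding Dl_def by linarith
  then have "D0 + C + J + 1 < gd (f p) (f z) + C" using lam by simp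
  then show ?thesis by simp
qed

lemma segment:
  assumes a: "a \<in> X" and b: "b \<in> X" and p: "p \<in> X" and g: "geod X d \<gamma> a b"
    and far: "\<forall>s\<in>{0..d a b}. d p (\<gamma> s) > Dl"
  shows "gpV (f p) (f a) (f b) \<ge> D0 + 1"
proof -
  define L where "L = d a b"
  have inX: "\<And>s. s \<in> {0..L} \<Longrightarrow> \<gamma> s \<in> X" using geod_props(3)[OF g] unfolding L_def by blast
  have L0: "0 \<le> L" unfolding L_def by (rule dnn)
  define q where "q = (\<lambda>k::nat. \<gamma> (min (real k) L))"
  have qr: "min (real k) L \<in> {0..L}" for k using L0 by auto
  have qX: "q k \<in> X" for k unfolding q_def using inX qr by blast
  have qfar: "gd (f p) (f (q k)) > D0 + 1 + J" for k
    using far_pt[OF p qX] far qr unfolding q_def L_def by blast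
  have "gpV (f p) (f a) (f (q k)) \<ge> D0 + 1" for k
  proof (induction k)
    case 0
    have "q 0 = a" unfolding q_def using geod_props(1)[OF g] L0 by simp
    then show ?case using gpV_self[OF p a] qfar[of 0] J0 by simp
  next
    case (Suc k)
    have "min (gpV (f p) (f a) (f (q k))) (gpV (f p) (f (q k)) (f (q (Suc k)))) \<le> gpV (f p) (f a) (f (q (Suc k)))"
      by (rule g4[OF p a qX qX])
    moreover have "gpV (f p) (f (q k)) (f (q (Suc k))) \<ge> gd (f p) (f (q (Suc k))) - gd (f (q k)) (f (q (Suc k)))"
      by (rule gpV_ge[OF p qX qX])
    moreover have "gd (f (q k)) (f (q (Suc k))) \<le> J"
    proof -
      have "\<bar>min (real k) L - min (real (Suc k)) L\<bar> \<le> 1" by auto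
      then show ?thesis unfolding q_def
        using geod_step[OF g qr[of k, unfolded L_def] qr[of "Suc k", unfolded L_def]] unfolding L_def by blast
    qed
    ultimately show ?case using Suc qfar[of "Suc k"] by linarith
  qed
  moreover have "q (nat \<lceil>L\<rceil>) = b"
  proof -
    have "L \<le> real (nat \<lceil>L\<rceil>)" using L0 by linarith
    then show ?thesis unfolding q_def using geod_props(2)[OF g] unfolding L_def by simp
  qed
  ultimately show ?thesis by metis
qed

lemma chain_far:
  assumes xs: "set xs \<subseteq> X" "xs \<noteq> []" and p: "p \<in> X" and h: "d p (hd xs) > Dl"
    and far: "\<forall>i<length xs - 1. \<forall>s\<in>{0..d (xs!i) (xs!Suc i)}. d p (geo X d (xs!i) (xs!Suc i) s) > Dl"
  shows "gpV (f p) (f (hd xs)) (f (last xs)) \<ge> D0 + 1"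
proof -
  have hX: "hd xs \<in> X" using xs by auto
  have nX: "k < length xs \<Longrightarrow> xs!k \<in> X" for k using xs by auto
  have "k < length xs \<longrightarrow> gpV (f p) (f (hd xs)) (f (xs!k)) \<ge> D0 + 1" for k
  proof (induction k)
    case 0
    show ?case using gpV_self[OF p hX] far_pt[OF p hX h] J0 xs by (simp add: hd_conv_nth)
  next
    case (Suc k)
    show ?case
    proof
      assume k: "Suc k < length xs"
      have xk: "xs!k \<in> X" and xk1: "xs!Suc k \<in> X" using nX k by auto
      have "gpV (f p) (f (xs!k)) (f (xs!Suc k)) \<ge> D0 + 1"
        using segment[OF xk xk1 p geo[OF gs xk xk1]] far k by auto
      moreover have "min (gpV (f p) (f (hd xs)) (f (xs!k))) (gpV (f p) (f (xs!k)) (f (xs!Suc k))) \<le> gpV (f p) (f (hd xs)) (f (xs!Suc k))"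
        by (rule g4[OF p hX xk xk1])
      ultimately show "gpV (f p) (f (hd xs)) (f (xs!Suc k)) \<ge> D0 + 1" using Suc k by auto
    qed
  qed
  then show ?thesis using xs by (simp add: last_conv_nth)
qed

lemma gpX_geod:
  assumes x0: "x0 \<in> X" and a: "a \<in> X" and b: "b \<in> X" and g: "geod X d \<sigma> a b" and s: "s \<in> {0..d a b}"
  shows "gpX x0 a b \<le> d x0 (\<sigma> s)"
proof -
  have z: "\<sigma> s \<in> X" using geod_props(3)[OF g s] .
  have L0: "0 \<in> {0..d a b}" "d a b \<in> {0..d a b}" using dnn s by auto
  have "d a (\<sigma> s) = s" using geod_props(4)[OF g L0(1) s] geod_props(1)[OF g] s by simp
  moreover have "d (\<sigma> s) b = d a b - s" using geod_props(4)[OF g s L0(2)] geod_props(2)[OF g] s by simp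
  moreover have "d x0 a \<le> d x0 (\<sigma> s) + d (\<sigma> s) a" by (rule dtri[OF x0 z a])
  moreover have "d x0 b \<le> d x0 (\<sigma> s) + d (\<sigma> s) b" by (rule dtri[OF x0 z b])
  moreover have "2 * gpX x0 a b = d x0 a + d x0 b - d a b" unfolding gromov_product_def by simp
  ultimately show ?thesis using dsym[of a "\<sigma> s"] by linarith
qed

lemma near:
  assumes x0: "x0 \<in> X" and x: "x \<in> X" and y: "y \<in> X" and g: "geod X d \<gamma> x y"
  shows "\<exists>t\<in>{0..d x y}. d x0 (\<gamma> t) \<le> gpX x0 x y + 2 * Dl"
proof -
  define t where "t = (d x y + d x x0 - d y x0) / 2"
  have t: "t \<in> {0..d x y}" unfolding t_def
    using dtri[OF y x x0] dtri[OF x y x0] dsym[of y x] by auto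
  define p where "p = \<gamma> t"
  have p: "p \<in> X" unfolding p_def using geod_props(3)[OF g t] .
  have t2: "2 * t = d x y + d x x0 - d y x0" unfolding t_def by simp
  have gp2: "2 * gpX x0 x y = d x0 x + d x0 y - d x y" unfolding gromov_product_def by simp
  have M: "gpV (f p) (f x) (f y) \<le> D0" unfolding p_def by (rule morse[OF x y g t])
  define \<sigma>1 where "\<sigma>1 = geo X d x x0"
  define \<sigma>2 where "\<sigma>2 = geo X d x0 y"
  have g1: "geod X d \<sigma>1 x x0" unfolding \<sigma>1_def by (rule geo[OF gs x x0])
  have g2: "geod X d \<sigma>2 x0 y" unfolding \<sigma>2_def by (rule geo[OF gs x0 y])
  have dxp: "d x p = t" unfolding p_def using geod_props(4)[OF g _ t, of 0] geod_props(1)[OF g] t by simp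
  have dpy: "d p y = d x y - t" unfolding p_def using geod_props(4)[OF g t, of "d x y"] geod_props(2)[OF g] t by simp
  have cases: "(\<exists>s\<in>{0..d x x0}. d p (\<sigma>1 s) \<le> Dl) \<or> (\<exists>s\<in>{0..d x0 y}. d p (\<sigma>2 s) \<le> Dl)"
  proof (rule ccontr)
    assume "\<not> ?thesis"
    then have f1: "\<forall>s\<in>{0..d x x0}. d p (\<sigma>1 s) > Dl" and f2: "\<forall>s\<in>{0..d x0 y}. d p (\<sigma>2 s) > Dl"
      by (auto simp: not_le)
    have "d p x > Dl" using f1 geod_props(1)[OF g1] dnn[of x x0] by force
    moreover have "\<forall>i<length [x,x0,y] - 1. \<forall>s\<in>{0..d ([x,x0,y]!i) ([x,x0,y]!Suc i)}.
        d p (geo X d ([x,x0,y]!i) ([x,x0,y]!Suc i) s) > Dl"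
    proof (intro allI impI ballI)
      fix i s assume i: "i < length [x,x0,y] - 1" and s: "s \<in> {0..d ([x,x0,y]!i) ([x,x0,y]!Suc i)}"
      then have "i = 0 \<or> i = 1" by auto
      then show "d p (geo X d ([x,x0,y]!i) ([x,x0,y]!Suc i) s) > Dl"
        using f1 f2 s unfolding \<sigma>1_def \<sigma>2_def by auto
    qed
    ultimately have "gpV (f p) (f (hd [x,x0,y])) (f (last [x,x0,y])) \<ge> D0 + 1"
      using chain_far[of "[x,x0,y]" p] x x0 y p by auto
    then show False using M by simp
  qed
  have "d x0 p \<le> gpX x0 x y + 2 * Dl"
  proof (cases "\<exists>s\<in>{0..d x x0}. d p (\<sigma>1 s) \<le> Dl")
    case True
    then obtain s where s: "s \<in> {0..d x x0}" and ds: "d p (\<sigma>1 s) \<le> Dl" by blast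
    have z: "\<sigma>1 s \<in> X" using geod_props(3)[OF g1 s] .
    have L0: "0 \<in> {0..d x x0}" "d x x0 \<in> {0..d x x0}" using dnn s by auto
    have "d x (\<sigma>1 s) = s" using geod_props(4)[OF g1 L0(1) s] geod_props(1)[OF g1] s by simp
    moreover have "d (\<sigma>1 s) x0 = d x x0 - s" using geod_props(4)[OF g1 s L0(2)] geod_props(2)[OF g1] s by simp
    moreover have "d x p \<le> d x (\<sigma>1 s) + d (\<sigma>1 s) p" by (rule dtri[OF x z p])
    moreover have "d x0 p \<le> d x0 (\<sigma>1 s) + d (\<sigma>1 s) p" by (rule dtri[OF x0 z p])
    ultimately show ?thesis using ds dxp dsym[of p "\<sigma>1 s"] dsym[of x0 "\<sigma>1 s"] dsym[of x0 x] dsym[of y x0]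
      using t2 gp2 by linarith
  next
    case False
    then obtain s where s: "s \<in> {0..d x0 y}" and ds: "d p (\<sigma>2 s) \<le> Dl" using cases by blast
    have z: "\<sigma>2 s \<in> X" using geod_props(3)[OF g2 s] .
    have L0: "0 \<in> {0..d x0 y}" "d x0 y \<in> {0..d x0 y}" using dnn s by auto
    have "d x0 (\<sigma>2 s) = s" using geod_props(4)[OF g2 L0(1) s] geod_props(1)[OF g2] s by simp
    moreover have "d (\<sigma>2 s) y = d x0 y - s" using geod_props(4)[OF g2 s L0(2)] geod_props(2)[OF g2] s by simp
    moreover have "d p y \<le> d p (\<sigma>2 s) + d (\<sigma>2 s) y" by (rule dtri[OF p z y])
    moreover have "d x0 p \<le> d x0 (\<sigma>2 s) + d (\<sigma>2 s) p" by (rule dtri[OF x0 z p])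
    ultimately show ?thesis using ds dpy dsym[of p "\<sigma>2 s"] dsym[of x0 x] dsym[of y x0]
      using t2 gp2 by linarith
  qed
  then show ?thesis using t unfolding p_def by blast
qed

lemma main_chain:
  assumes x0: "x0 \<in> X" and xs: "length xs \<ge> 2" "set xs \<subseteq> X"
  shows "\<exists>i<length xs - 1. gpX x0 (xs!i) (xs!Suc i) \<le> gpX x0 (hd xs) (last xs) + 3 * Dl"
proof (rule ccontr)
  assume "\<not> ?thesis"
  then have big: "\<forall>i<length xs - 1. gpX x0 (xs!i) (xs!Suc i) > gpX x0 (hd xs) (last xs) + 3 * Dl"
    by (auto simp: not_le)
  have ne: "xs \<noteq> []" using xs by auto
  have x: "hd xs \<in> X" and y: "last xs \<in> X" using xs ne by auto
  obtain t where t: "t \<in> {0..d (hd xs) (last xs)}"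
    and dt: "d x0 (geo X d (hd xs) (last xs) t) \<le> gpX x0 (hd xs) (last xs) + 2 * Dl"
    using near[OF x0 x y geo[OF gs x y]] by blast
  define p where "p = geo X d (hd xs) (last xs) t"
  have p: "p \<in> X" unfolding p_def using geod_props(3)[OF geo[OF gs x y] t] .
  have nX: "k < length xs \<Longrightarrow> xs!k \<in> X" for k using xs by auto
  have far: "\<forall>i<length xs - 1. \<forall>s\<in>{0..d (xs!i) (xs!Suc i)}. d p (geo X d (xs!i) (xs!Suc i) s) > Dl"
  proof (intro allI impI ballI)
    fix i s assume i: "i < length xs - 1" and s: "s \<in> {0..d (xs!i) (xs!Suc i)}"
    have a: "xs!i \<in> X" and b: "xs!Suc i \<in> X" using nX i by auto
    have gg: "geod X d (geo X d (xs!i) (xs!Suc i)) (xs!i) (xs!Suc i)" by (rule geo[OF gs a b])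
    have z: "geo X d (xs!i) (xs!Suc i) s \<in> X" using geod_props(3)[OF gg s] .
    have "gpX x0 (xs!i) (xs!Suc i) \<le> d x0 (geo X d (xs!i) (xs!Suc i) s)" by (rule gpX_geod[OF x0 a b gg s])
    moreover have "d x0 (geo X d (xs!i) (xs!Suc i) s) \<le> d x0 p + d p (geo X d (xs!i) (xs!Suc i) s)"
      by (rule dtri[OF x0 p z])
    ultimately show "d p (geo X d (xs!i) (xs!Suc i) s) > Dl" using big i dt unfolding p_def by force
  qed
  have "d p (hd xs) > Dl"
  proof -
    have "0 < length xs - 1" using xs by simp
    moreover have "0 \<in> {0..d (xs!0) (xs!Suc 0)}" using dnn by simp
    ultimately have "d p (geo X d (xs!0) (xs!Suc 0) 0) > Dl" using far by blast
    moreover have "geo X d (xs!0) (xs!Suc 0) 0 = xs!0"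
    proof -
      have "0 < length xs" "Suc 0 < length xs" using xs by auto
      then show ?thesis using geod_props(1)[OF geo[OF gs nX[of 0] nX[of "Suc 0"]]] by simp
    qed
    ultimately show ?thesis using ne by (simp add: hd_conv_nth)
  qed
  then have "gpV (f p) (f (hd xs)) (f (last xs)) \<ge> D0 + 1" using chain_far[OF xs(2) ne p _ far] by simp
  moreover have "gpV (f p) (f (hd xs)) (f (last xs)) \<le> D0"
    unfolding p_def by (rule morse[OF x y geo[OF gs x y] t])
  ultimately show False by simp
qed

end



lemma app_tl_nth:
  assumes "xs \<noteq> []" "ys \<noteq> []" "last xs = hd ys" "i < length (xs @ tl ys)"
  shows "(xs @ tl ys) ! i = (if i < length xs - 1 then xs!i else ys!(i - (length xs - 1)))"
proof (cases "i < length xs")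
  case True
  then show ?thesis
  proof (cases "i < length xs - 1")
    case False
    then have "i = length xs - 1" using True by simp
    then show ?thesis using assms True by (simp add: nth_append last_conv_nth hd_conv_nth)
  qed (simp add: nth_append)
next
  case False
  then have "(xs @ tl ys) ! i = tl ys ! (i - length xs)" by (simp add: nth_append)
  also have "\<dots> = ys ! Suc (i - length xs)" using assms False by (simp add: nth_tl)
  also have "Suc (i - length xs) = i - (length xs - 1)" using False assms(1) by (cases xs) auto
  moreover have "\<not> i < length xs - 1" using False by simp
  ultimately show ?thesis by simp
qed

context
  fixes X :: "'a set" and d :: "'a \<Rightarrow> 'a \<Rightarrow> real" and x0 :: 'a
  assumes ms: "Metric_space X d" and x0: "x0 \<in> X"
begin

abbreviation "gp \<equiv> gromov_product d x0"

lemma dsym': "d x y = d y x" using Metric_space.commute[OF ms] .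
lemma dtri': "x \<in> X \<Longrightarrow> y \<in> X \<Longrightarrow> z \<in> X \<Longrightarrow> d x z \<le> d x y + d y z"
  using Metric_space.triangle[OF ms] .
lemma d0': "x \<in> X \<Longrightarrow> d x x = 0" using Metric_space.zero[OF ms] by blast

lemma gp_sym: "gp x y = gp y x" unfolding gromov_product_def using dsym' by simp
lemma gp_le1: "x \<in> X \<Longrightarrow> y \<in> X \<Longrightarrow> gp x y \<le> d x0 x"
  unfolding gromov_product_def using dtri'[OF x0, of x y] by simp
lemma gp_le2: "x \<in> X \<Longrightarrow> y \<in> X \<Longrightarrow> gp x y \<le> d x0 y"
  using gp_le1 gp_sym by metis
lemma gp_nn: "x \<in> X \<Longrightarrow> y \<in> X \<Longrightarrow> 0 \<le> gp x y"
  unfolding gromov_product_def using dtri'[OF _ x0, of x y] dsym'[of x x0] by simp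

definition cval :: "'a list \<Rightarrow> real" where
  "cval xs = Min ((\<lambda>i. gp (xs ! i) (xs ! Suc i)) ` {..<length xs - 1})"

definition cset :: "'a \<Rightarrow> 'a \<Rightarrow> real set" where
  "cset x y = {cval xs | xs. length xs \<ge> 2 \<and> hd xs = x \<and> last xs = y \<and> set xs \<subseteq> X}"

lemma chain_def': "chain_product X d x0 x y = Sup (cset x y)"
  unfolding chain_product_def cset_def cval_def by simp

lemma cval_le: "length xs \<ge> 2 \<Longrightarrow> i < length xs - 1 \<Longrightarrow> cval xs \<le> gp (xs!i) (xs!Suc i)"
  unfolding cval_def by (rule Min_le) auto

lemma cval_ge: "length xs \<ge> 2 \<Longrightarrow> (\<And>i. i < length xs - 1 \<Longrightarrow> m \<le> gp (xs!i) (xs!Suc i)) \<Longrightarrow> m \<le> cval xs"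
proof -
  assume l: "length xs \<ge> 2" and h: "\<And>i. i < length xs - 1 \<Longrightarrow> m \<le> gp (xs!i) (xs!Suc i)"
  have "0 \<in> {..<length xs - 1}" using l by simp
  then have "{..<length xs - 1} \<noteq> {}" by blast
  then show ?thesis unfolding cval_def using h by (subst Min_ge_iff) auto
qed

lemma cset_le1: "v \<in> cset x y \<Longrightarrow> v \<le> d x0 x"
proof -
  assume "v \<in> cset x y"
  then obtain xs where xs: "v = cval xs" "length xs \<ge> 2" "hd xs = x" "last xs = y" "set xs \<subseteq> X"
    unfolding cset_def by blast
  have "v \<le> gp (xs!0) (xs!Suc 0)" using cval_le[OF xs(2), of 0] xs by simp
  also have "\<dots> \<le> d x0 (xs!0)"
  proof -
    have "xs!0 \<in> set xs" "xs!Suc 0 \<in> set xs" using xs(2) by (auto intro!: nth_mem)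
    then show ?thesis using xs(5) by (intro gp_le1) auto
  qed
  also have "xs!0 = x" using xs by (cases xs) auto
  finally show ?thesis .
qed

lemma cset_le2: "v \<in> cset x y \<Longrightarrow> v \<le> d x0 y"
proof -
  assume "v \<in> cset x y"
  then obtain xs where xs: "v = cval xs" "length xs \<ge> 2" "hd xs = x" "last xs = y" "set xs \<subseteq> X"
    unfolding cset_def by blast
  define n where "n = length xs - 2"
  have n: "n < length xs - 1" "Suc n = length xs - 1" using xs unfolding n_def by auto
  have "v \<le> gp (xs!n) (xs!Suc n)" using cval_le[OF xs(2) n(1)] xs by simp
  also have "\<dots> \<le> d x0 (xs!Suc n)" using xs n by (intro gp_le2) auto
  also have "xs!Suc n = y"
  proof -
    have "last xs = xs!(length xs - 1)" using xs(2) by (intro last_conv_nth) auto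
    then show ?thesis using xs(4) n(2) by simp
  qed
  finally show ?thesis .
qed

lemma cset_in: "x \<in> X \<Longrightarrow> y \<in> X \<Longrightarrow> gp x y \<in> cset x y"
proof -
  assume "x \<in> X" "y \<in> X"
  have "{..<length [x,y] - 1} = {0}" by auto
  then have "cval [x,y] = gp x y" unfolding cval_def by simp
  then show ?thesis unfolding cset_def using \<open>x \<in> X\<close> \<open>y \<in> X\<close> by (intro CollectI exI[of _ "[x,y]"]) auto
qed

lemma cset_bdd: "bdd_above (cset x y)"
  using cset_le1 by (meson bdd_aboveI)

lemma chain_ge: "x \<in> X \<Longrightarrow> y \<in> X \<Longrightarrow> gp x y \<le> chain_product X d x0 x y"
  unfolding chain_def' by (rule cSup_upper[OF cset_in cset_bdd])

lemma chain_le1: "x \<in> X \<Longrightarrow> y \<in> X \<Longrightarrow> chain_product X d x0 x y \<le> d x0 x"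
  unfolding chain_def' using cset_in by (intro cSup_least) (auto intro: cset_le1)

lemma chain_le2: "x \<in> X \<Longrightarrow> y \<in> X \<Longrightarrow> chain_product X d x0 x y \<le> d x0 y"
  unfolding chain_def' using cset_in by (intro cSup_least) (auto intro: cset_le2)

lemma cval_rev: "length xs \<ge> 2 \<Longrightarrow> cval (rev xs) = cval xs"
proof -
  assume l: "length xs \<ge> 2"
  define n where "n = length xs"
  have "(\<lambda>i. gp (rev xs ! i) (rev xs ! Suc i)) ` {..<n - 1} = (\<lambda>i. gp (xs ! i) (xs ! Suc i)) ` {..<n - 1}"
  proof (intro equalityI subsetI)
    fix v assume "v \<in> (\<lambda>i. gp (rev xs ! i) (rev xs ! Suc i)) ` {..<n - 1}"
    then obtain i where i: "i < n - 1" "v = gp (rev xs ! i) (rev xs ! Suc i)" by blast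
    have "v = gp (xs ! (n - 2 - i)) (xs ! Suc (n - 2 - i))"
      using i l unfolding n_def by (simp add: rev_nth gp_sym Suc_diff_Suc numeral_2_eq_2)
    then show "v \<in> (\<lambda>i. gp (xs ! i) (xs ! Suc i)) ` {..<n - 1}" using i by auto
  next
    fix v assume "v \<in> (\<lambda>i. gp (xs ! i) (xs ! Suc i)) ` {..<n - 1}"
    then obtain i where i: "i < n - 1" "v = gp (xs ! i) (xs ! Suc i)" by blast
    have "v = gp (rev xs ! (n - 2 - i)) (rev xs ! Suc (n - 2 - i))"
      using i l unfolding n_def by (simp add: rev_nth gp_sym Suc_diff_Suc numeral_2_eq_2)
    then show "v \<in> (\<lambda>i. gp (rev xs ! i) (rev xs ! Suc i)) ` {..<n - 1}" using i by auto
  qed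
  then show ?thesis unfolding cval_def n_def by simp
qed

lemma cset_sym: "cset x y = cset y x"
proof -
  have "cset x y \<subseteq> cset y x" for x y
  proof
    fix v assume "v \<in> cset x y"
    then obtain xs where xs: "v = cval xs" "length xs \<ge> 2" "hd xs = x" "last xs = y" "set xs \<subseteq> X"
      unfolding cset_def by blast
    then have "v = cval (rev xs)" using cval_rev by simp
    moreover have "hd (rev xs) = y" "last (rev xs) = x" using xs by (auto simp: hd_rev last_rev)
    ultimately show "v \<in> cset y x" unfolding cset_def using xs by (intro CollectI exI[of _ "rev xs"]) auto
  qed
  then show ?thesis by blast
qed

lemma chain_sym: "chain_product X d x0 x y = chain_product X d x0 y x"
  unfolding chain_def' using cset_sym by simp

lemma cset_concat:
  assumes "v1 \<in> cset a b" "v2 \<in> cset b c"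
  shows "\<exists>v\<in>cset a c. min v1 v2 \<le> v"
proof -
  obtain xs where xs: "v1 = cval xs" "length xs \<ge> 2" "hd xs = a" "last xs = b" "set xs \<subseteq> X"
    using assms(1) unfolding cset_def by blast
  obtain ys where ys: "v2 = cval ys" "length ys \<ge> 2" "hd ys = b" "last ys = c" "set ys \<subseteq> X"
    using assms(2) unfolding cset_def by blast
  define zs where "zs = xs @ tl ys"
  have xne: "xs \<noteq> []" and yne: "ys \<noteq> []" using xs ys by auto
  have lz: "length zs = length xs + length ys - 1" unfolding zs_def using yne by (cases ys) auto
  have zl: "length zs \<ge> 2" using lz xs ys by simp
  have zh: "hd zs = a" unfolding zs_def using xs xne by simp
  have zlast: "last zs = c"
  proof -
    obtain y1 ys' where yy: "ys = y1 # ys'" using yne by (cases ys) auto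
    then have "ys' \<noteq> []" using ys(2) by auto
    then show ?thesis unfolding zs_def using ys(4) yy by simp
  qed
  have zset: "set zs \<subseteq> X" unfolding zs_def using xs ys by (auto dest: list.set_sel(2)[OF yne])
  have "min v1 v2 \<le> cval zs"
  proof (rule cval_ge[OF zl])
    fix i assume i: "i < length zs - 1"
    have nth: "zs ! j = (if j < length xs - 1 then xs!j else ys!(j - (length xs - 1)))" if "j < length zs" for j
      unfolding zs_def using app_tl_nth[OF xne yne] xs ys that unfolding zs_def by simp
    show "min v1 v2 \<le> gp (zs ! i) (zs ! Suc i)"
    proof (cases "i < length xs - 1")
      case True
      have "zs!i = xs!i" using nth[of i] i True by simp
      moreover have "zs!Suc i = xs!Suc i"
      proof (cases "Suc i < length xs - 1")
        case True then show ?thesis using nth[of "Suc i"] i by simp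
      next
        case False
        then have "Suc i = length xs - 1" using \<open>i < length xs - 1\<close> by simp
        then show ?thesis using nth[of "Suc i"] i xs ys xne yne by (simp add: hd_conv_nth last_conv_nth)
      qed
      ultimately show ?thesis using cval_le[OF xs(2) True] xs by simp
    next
      case False
      define j where "j = i - (length xs - 1)"
      have j: "j < length ys - 1" using i False lz unfolding j_def by simp
      have "zs!i = ys!j" using nth[of i] i False unfolding j_def by simp
      moreover have "zs!Suc i = ys!Suc j" using nth[of "Suc i"] i False unfolding j_def by (simp add: Suc_diff_le)
      ultimately show ?thesis using cval_le[OF ys(2) j] ys by simp
    qed
  qed
  moreover have "cval zs \<in> cset a c" unfolding cset_def using zl zh zlast zset by blast
  ultimately show ?thesis by blast
qed

lemma chain_min:
  assumes a: "a \<in> X" and b: "b \<in> X" and c: "c \<in> X"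
  shows "min (chain_product X d x0 a b) (chain_product X d x0 b c) \<le> chain_product X d x0 a c"
proof (rule ccontr)
  assume "\<not> ?thesis"
  then have h: "chain_product X d x0 a c < Sup (cset a b)" "chain_product X d x0 a c < Sup (cset b c)"
    unfolding chain_def'[of a b] chain_def'[of b c] by auto
  obtain v1 where v1: "v1 \<in> cset a b" "chain_product X d x0 a c < v1"
    using h(1) cset_in[OF a b] less_cSup_iff[OF _ cset_bdd] by blast
  obtain v2 where v2: "v2 \<in> cset b c" "chain_product X d x0 a c < v2"
    using h(2) cset_in[OF b c] less_cSup_iff[OF _ cset_bdd] by blast
  obtain v where v: "v \<in> cset a c" "min v1 v2 \<le> v" using cset_concat[OF v1(1) v2(1)] by blast
  have "v \<le> chain_product X d x0 a c" unfolding chain_def' by (rule cSup_upper[OF v(1) cset_bdd])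
  then show False using v v1 v2 by linarith
qed

lemma chain_x0: "x \<in> X \<Longrightarrow> chain_product X d x0 x0 x = 0"
proof -
  assume x: "x \<in> X"
  have "gp x0 x = 0" unfolding gromov_product_def using d0'[OF x0] by simp
  then show ?thesis using chain_le1[OF x0 x] chain_ge[OF x0 x] d0'[OF x0] by simp
qed

lemma chain_self: "x \<in> X \<Longrightarrow> chain_product X d x0 x x = d x0 x"
  using chain_le1[of x x] chain_ge[of x x] d0'[of x] unfolding gromov_product_def by simp

abbreviation "ed \<equiv> ea_dist X d x0"

lemma ed_sym: "ed x y = ed y x" unfolding ea_dist_def using chain_sym by simp

lemma ed_tri: "x \<in> X \<Longrightarrow> y \<in> X \<Longrightarrow> z \<in> X \<Longrightarrow> ed x z \<le> ed x y + ed y z"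
  unfolding ea_dist_def using chain_min[of x y z] chain_le2[of x y] chain_le1[of y z] by linarith

lemma ed_self: "x \<in> X \<Longrightarrow> ed x x = 0"
  unfolding ea_dist_def using chain_self by simp

lemma ed_x0: "x \<in> X \<Longrightarrow> ed x0 x = d x0 x"
  unfolding ea_dist_def using chain_x0 d0'[OF x0] by simp

abbreviation "cls \<equiv> ea_class X d x0"

lemma cls_mem: "x \<in> X \<Longrightarrow> x \<in> cls x"
  unfolding ea_class_def using ed_self by simp

lemma cls_rep: "x \<in> X \<Longrightarrow> x' \<in> cls x \<Longrightarrow> y \<in> X \<Longrightarrow> ed x' y = ed x y"
proof -
  assume x: "x \<in> X" and x': "x' \<in> cls x" and y: "y \<in> X"
  have x'X: "x' \<in> X" and e: "ed x x' = 0" using x' unfolding ea_class_def by auto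
  have "ed x' y \<le> ed x' x + ed x y" by (rule ed_tri[OF x'X x y])
  moreover have "ed x y \<le> ed x x' + ed x' y" by (rule ed_tri[OF x x'X y])
  ultimately show ?thesis using e ed_sym[of x x'] by simp
qed

lemma em_cls: "x \<in> X \<Longrightarrow> y \<in> X \<Longrightarrow> ea_metric X d x0 (cls x) (cls y) = ed x y"
proof -
  assume x: "x \<in> X" and y: "y \<in> X"
  define x' where "x' = (SOME z. z \<in> cls x)"
  define y' where "y' = (SOME z. z \<in> cls y)"
  have x': "x' \<in> cls x" unfolding x'_def using cls_mem[OF x] by (rule someI)
  have y': "y' \<in> cls y" unfolding y'_def using cls_mem[OF y] by (rule someI)
  have y'X: "y' \<in> X" using y' unfolding ea_class_def by auto
  have "ed x' y' = ed x y'" by (rule cls_rep[OF x x' y'X])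
  also have "\<dots> = ed y' x" by (rule ed_sym)
  also have "\<dots> = ed y x" by (rule cls_rep[OF y y' x])
  also have "\<dots> = ed x y" by (rule ed_sym)
  finally show ?thesis unfolding ea_metric_def x'_def y'_def .
qed

lemma em_sym: "ea_metric X d x0 P Q = ea_metric X d x0 Q P"
  unfolding ea_metric_def using ed_sym by simp

lemma gpT_sym: "gromov_product (ea_metric X d x0) w P Q = gromov_product (ea_metric X d x0) w Q P"
  unfolding gromov_product_def using em_sym by simp

lemma gpT_cls: "x \<in> X \<Longrightarrow> y \<in> X \<Longrightarrow>
  gromov_product (ea_metric X d x0) (cls x0) (cls x) (cls y) = chain_product X d x0 x y"
  unfolding gromov_product_def using em_cls[OF x0] em_cls ed_x0 unfolding ea_dist_def by simp

end



definition gconv :: "'a set \<Rightarrow> ('a \<Rightarrow> 'a \<Rightarrow> real) \<Rightarrow> (nat \<Rightarrow> 'a) \<Rightarrow> bool" where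
  "gconv S g xs \<longleftrightarrow> (\<forall>n. xs n \<in> S) \<and> (\<forall>M. \<exists>N. \<forall>i\<ge>N. \<forall>j\<ge>N. g (xs i) (xs j) \<ge> M)"

definition geq :: "('a \<Rightarrow> 'a \<Rightarrow> real) \<Rightarrow> (nat \<Rightarrow> 'a) \<Rightarrow> (nat \<Rightarrow> 'a) \<Rightarrow> bool" where
  "geq g xs ys \<longleftrightarrow> (\<forall>M. \<exists>N. \<forall>i\<ge>N. \<forall>j\<ge>N. g (xs i) (ys j) \<ge> M)"

definition LL :: "('a \<Rightarrow> 'a \<Rightarrow> real) \<Rightarrow> (nat \<Rightarrow> 'a) \<Rightarrow> (nat \<Rightarrow> 'a) \<Rightarrow> ereal" where
  "LL g xs ys = Liminf (sequentially \<times>\<^sub>F sequentially) (\<lambda>(i, j). ereal (g (xs i) (ys j)))"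

definition gcls :: "'a set \<Rightarrow> ('a \<Rightarrow> 'a \<Rightarrow> real) \<Rightarrow> (nat \<Rightarrow> 'a) \<Rightarrow> (nat \<Rightarrow> 'a) set" where
  "gcls S g xs = {ys. gconv S g ys \<and> geq g xs ys}"

definition gbnd :: "'a set \<Rightarrow> ('a \<Rightarrow> 'a \<Rightarrow> real) \<Rightarrow> (nat \<Rightarrow> 'a) set set" where
  "gbnd S g = {gcls S g xs | xs. gconv S g xs}"

definition gbp :: "('a \<Rightarrow> 'a \<Rightarrow> real) \<Rightarrow> (nat \<Rightarrow> 'a) set \<Rightarrow> (nat \<Rightarrow> 'a) set \<Rightarrow> ereal" where
  "gbp g p q = Sup {LL g xs ys | xs ys. xs \<in> p \<and> ys \<in> q}"

lemma ev_prod_seq: "eventually (\<lambda>(i, j). P i j) (sequentially \<times>\<^sub>F sequentially) \<longleftrightarrow> (\<exists>N. \<forall>i\<ge>N. \<forall>j\<ge>N. P i j)"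
  unfolding eventually_prod_sequentially by auto

lemma ev2: "eventually (\<lambda>x. P (case x of (i, j) \<Rightarrow> f i j)) (sequentially \<times>\<^sub>F sequentially) \<longleftrightarrow> (\<exists>N. \<forall>i\<ge>N. \<forall>j\<ge>N. P (f i j))"
  unfolding eventually_prod_sequentially by auto

lemma le_LL_iff: "C \<le> LL g xs ys \<longleftrightarrow> (\<forall>y<C. \<exists>N. \<forall>i\<ge>N. \<forall>j\<ge>N. y < ereal (g (xs i) (ys j)))"
  unfolding LL_def le_Liminf_iff
  using ev2[of "\<lambda>v. _ < v" "\<lambda>i j. ereal (g (xs i) (ys j))"] by simp

lemma LL_inf: "LL g xs ys = \<infinity> \<longleftrightarrow> geq g xs ys"
proof -
  have "LL g xs ys = \<infinity> \<longleftrightarrow> \<infinity> \<le> LL g xs ys" by auto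
  also have "\<dots> \<longleftrightarrow> geq g xs ys"
    unfolding le_LL_iff geq_def
  proof (intro iffI allI impI)
    fix M :: real assume h: "\<forall>y<\<infinity>. \<exists>N. \<forall>i\<ge>N. \<forall>j\<ge>N. y < ereal (g (xs i) (ys j))"
    then obtain N where "\<forall>i\<ge>N. \<forall>j\<ge>N. ereal M < ereal (g (xs i) (ys j))" using h[rule_format, of "ereal M"] by auto
    then show "\<exists>N. \<forall>i\<ge>N. \<forall>j\<ge>N. M \<le> g (xs i) (ys j)" by (auto intro!: exI[of _ N] less_imp_le)
  next
    fix y :: ereal assume h: "\<forall>M. \<exists>N. \<forall>i\<ge>N. \<forall>j\<ge>N. M \<le> g (xs i) (ys j)" and y: "y < \<infinity>"
    obtain M :: real where M: "y < ereal M" using y by (cases y) (auto, meson gt_ex)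
    obtain N where "\<forall>i\<ge>N. \<forall>j\<ge>N. M \<le> g (xs i) (ys j)" using h by blast
    then show "\<exists>N. \<forall>i\<ge>N. \<forall>j\<ge>N. y < ereal (g (xs i) (ys j))"
      using M by (meson ereal_less_eq(3) less_le_trans)
  qed
  finally show ?thesis .
qed

lemma LL_sym: "(\<And>x y. g x y = g y x) \<Longrightarrow> LL g xs ys = LL g ys xs"
proof -
  assume s: "\<And>x y. g x y = g y x"
  have "C \<le> LL g xs ys \<longleftrightarrow> C \<le> LL g ys xs" for C
    unfolding le_LL_iff using s by metis
  then show ?thesis by (meson order_antisym order_refl)
qed

lemma LL_mono: "(\<And>i j. g (xs i) (ys j) \<le> g' (xs' i) (ys' j)) \<Longrightarrow> LL g xs ys \<le> LL g' xs' ys'"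
  unfolding LL_def by (intro Liminf_mono always_eventually) (auto split: prod.splits)

lemma LL_plus:
  assumes "\<And>i j. g' (xs' i) (ys' j) \<le> g (xs i) (ys j) + c"
  shows "LL g' xs' ys' \<le> LL g xs ys + ereal c"
proof -
  have nb: "sequentially \<times>\<^sub>F sequentially \<noteq> (bot :: (nat \<times> nat) filter)"
    by (simp add: prod_filter_eq_bot)
  have "LL g' xs' ys' \<le> Liminf (sequentially \<times>\<^sub>F sequentially) (\<lambda>ij. (\<lambda>(i, j). ereal (g (xs i) (ys j))) ij + ereal c)"
    unfolding LL_def using assms by (intro Liminf_mono always_eventually) (auto split: prod.splits)
  also have "\<dots> = LL g xs ys + ereal c" unfolding LL_def by (rule Liminf_add_ereal_right[OF nb]) simp
  finally show ?thesis .
qed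

lemma LL_nn: "(\<And>i j. 0 \<le> g (xs i) (ys j)) \<Longrightarrow> 0 \<le> LL g xs ys"
  unfolding LL_def by (intro Liminf_bounded always_eventually) (auto split: prod.splits)

lemma LL_4pt:
  assumes hyp: "\<And>i j k. min (g (xs i) (ys k)) (g (ys k) (zs j)) \<le> g (xs i) (zs j)"
  shows "min (LL g xs ys) (LL g ys zs) \<le> LL g xs zs"
  unfolding le_LL_iff
proof (intro allI impI)
  fix y assume y: "y < min (LL g xs ys) (LL g ys zs)"
  then have "y < LL g xs ys" "y < LL g ys zs" by auto
  then obtain N1 N2 where N1: "\<forall>i\<ge>N1. \<forall>j\<ge>N1. y < ereal (g (xs i) (ys j))"
    and N2: "\<forall>i\<ge>N2. \<forall>j\<ge>N2. y < ereal (g (ys i) (zs j))"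
    using le_LL_iff[of "LL g xs ys" g xs ys] le_LL_iff[of "LL g ys zs" g ys zs] by blast
  define N where "N = max N1 N2"
  have "y < ereal (g (xs i) (zs j))" if "i \<ge> N" "j \<ge> N" for i j
  proof -
    have "y < ereal (g (xs i) (ys N))" "y < ereal (g (ys N) (zs j))" using N1 N2 that unfolding N_def by auto
    then have "y < ereal (min (g (xs i) (ys N)) (g (ys N) (zs j)))" by (simp add: min_def)
    also have "\<dots> \<le> ereal (g (xs i) (zs j))" using hyp[of i N j] by (auto simp: min_def split: if_splits)
    finally show ?thesis .
  qed
  then show "\<exists>N. \<forall>i\<ge>N. \<forall>j\<ge>N. y < ereal (g (xs i) (zs j))" by blast
qed

section \<open>Equivalence with a hyperbolicity constant\<close>

locale hypg =
  fixes S :: "'a set" and g :: "'a \<Rightarrow> 'a \<Rightarrow> real" and \<delta> :: real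
  assumes gsym: "\<And>x y. g x y = g y x"
    and hyp: "\<And>x y z. x \<in> S \<Longrightarrow> y \<in> S \<Longrightarrow> z \<in> S \<Longrightarrow> min (g x y) (g y z) - \<delta> \<le> g x z"
begin

lemma gconv_alt: "gconv S g xs \<longleftrightarrow> (\<forall>n. xs n \<in> S) \<and> geq g xs xs"
  unfolding gconv_def geq_def by simp

lemma geq_sym: "geq g xs ys \<Longrightarrow> geq g ys xs"
  unfolding geq_def using gsym by metis

lemma geq_trans:
  assumes S: "\<forall>n. xs n \<in> S" "\<forall>n. ys n \<in> S" "\<forall>n. zs n \<in> S" and a: "geq g xs ys" and b: "geq g ys zs"
  shows "geq g xs zs"
  unfolding geq_def
proof
  fix M
  obtain N1 where N1: "\<forall>i\<ge>N1. \<forall>j\<ge>N1. g (xs i) (ys j) \<ge> M + \<delta>" using a unfolding geq_def by blast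
  obtain N2 where N2: "\<forall>i\<ge>N2. \<forall>j\<ge>N2. g (ys i) (zs j) \<ge> M + \<delta>" using b unfolding geq_def by blast
  define N where "N = max N1 N2"
  have "g (xs i) (zs j) \<ge> M" if "i \<ge> N" "j \<ge> N" for i j
  proof -
    have "g (xs i) (ys N) \<ge> M + \<delta>" "g (ys N) (zs j) \<ge> M + \<delta>" using N1 N2 that unfolding N_def by auto
    moreover have "min (g (xs i) (ys N)) (g (ys N) (zs j)) - \<delta> \<le> g (xs i) (zs j)" using hyp S by blast
    ultimately show ?thesis by linarith
  qed
  then show "\<exists>N. \<forall>i\<ge>N. \<forall>j\<ge>N. M \<le> g (xs i) (zs j)" by blast
qed

lemma cls_self: "gconv S g xs \<Longrightarrow> xs \<in> gcls S g xs"
  unfolding gcls_def using gconv_alt by blast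

lemma cls_eq: "gconv S g xs \<Longrightarrow> gconv S g ys \<Longrightarrow> gcls S g xs = gcls S g ys \<longleftrightarrow> geq g xs ys"
proof
  assume "gconv S g xs" "gconv S g ys" "gcls S g xs = gcls S g ys"
  then show "geq g xs ys" using cls_self[of ys] unfolding gcls_def by blast
next
  assume x: "gconv S g xs" and y: "gconv S g ys" and e: "geq g xs ys"
  have xS: "\<forall>n. xs n \<in> S" and yS: "\<forall>n. ys n \<in> S" using x y unfolding gconv_def by auto
  show "gcls S g xs = gcls S g ys"
  proof (intro equalityI subsetI)
    fix zs assume "zs \<in> gcls S g xs"
    then have z: "gconv S g zs" "geq g xs zs" unfolding gcls_def by auto
    then have "geq g ys zs" using geq_trans[OF yS xS _ geq_sym[OF e]] unfolding gconv_def by blast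
    then show "zs \<in> gcls S g ys" using z unfolding gcls_def by auto
  next
    fix zs assume "zs \<in> gcls S g ys"
    then have z: "gconv S g zs" "geq g ys zs" unfolding gcls_def by auto
    then have "geq g xs zs" using geq_trans[OF xS yS _ e] unfolding gconv_def by blast
    then show "zs \<in> gcls S g xs" using z unfolding gcls_def by auto
  qed
qed

lemma bnd_mem: "p \<in> gbnd S g \<Longrightarrow> xs \<in> p \<Longrightarrow> gconv S g xs \<and> p = gcls S g xs"
proof -
  assume p: "p \<in> gbnd S g" and xs: "xs \<in> p"
  then obtain zs where z: "gconv S g zs" "p = gcls S g zs" unfolding gbnd_def by blast
  then have x: "gconv S g xs" "geq g zs xs" using xs unfolding gcls_def by auto
  then show ?thesis using cls_eq[OF z(1) x(1)] z by auto
qed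

lemma bnd_ne: "p \<in> gbnd S g \<Longrightarrow> \<exists>xs. xs \<in> p"
  unfolding gbnd_def using cls_self by blast

end


lemma LL_first:
  assumes hyp: "\<And>P Q R. P \<in> T \<Longrightarrow> Q \<in> T \<Longrightarrow> R \<in> T \<Longrightarrow> min (g P Q) (g Q R) \<le> g P R"
    and gsym: "\<And>x y. g x y = g y x"
    and S: "\<forall>n. xs n \<in> T" "\<forall>n. xs' n \<in> T" "\<forall>n. ys n \<in> T" and e: "geq g xs xs'"
  shows "LL g xs ys \<le> LL g xs' ys"
proof -
  have "min (LL g xs' xs) (LL g xs ys) \<le> LL g xs' ys"
    by (rule LL_4pt) (use hyp S in blast)
  moreover have "geq g xs' xs" using e gsym unfolding geq_def by metis
  then have "LL g xs' xs = \<infinity>" using LL_inf by blast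
  ultimately show ?thesis by simp
qed

lemma LL_equiv2:
  assumes hyp: "\<And>P Q R. P \<in> T \<Longrightarrow> Q \<in> T \<Longrightarrow> R \<in> T \<Longrightarrow> min (g P Q) (g Q R) \<le> g P R"
    and gsym: "\<And>x y. g x y = g y x"
    and S: "\<forall>n. xs n \<in> T" "\<forall>n. xs' n \<in> T" "\<forall>n. ys n \<in> T" "\<forall>n. ys' n \<in> T"
    and e1: "geq g xs xs'" and e2: "geq g ys ys'"
  shows "LL g xs ys = LL g xs' ys'"
proof -
  have e1': "geq g xs' xs" and e2': "geq g ys' ys" using e1 e2 gsym unfolding geq_def by metis+
  have "LL g xs ys = LL g xs' ys"
    using LL_first[OF hyp gsym S(1,2,3) e1] LL_first[OF hyp gsym S(2,1,3) e1'] by simp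
  also have "\<dots> = LL g ys xs'" using LL_sym gsym by metis
  also have "\<dots> = LL g ys' xs'"
    using LL_first[OF hyp gsym S(3,4,2) e2] LL_first[OF hyp gsym S(4,3,2) e2'] by simp
  also have "\<dots> = LL g xs' ys'" using LL_sym gsym by metis
  finally show ?thesis .
qed

definition vp_ok :: "real \<Rightarrow> bool" where "vp_ok a \<longleftrightarrow> a > 1"

lemma vp_nn: "0 \<le> vis_pow a r" unfolding vis_pow_def by simp

lemma vp_zero: "a > 1 \<Longrightarrow> vis_pow a r = 0 \<longleftrightarrow> r = \<infinity>"
  unfolding vis_pow_def by simp

lemma vp_anti: "a > 1 \<Longrightarrow> 0 \<le> r \<Longrightarrow> r \<le> r' \<Longrightarrow> vis_pow a r' \<le> vis_pow a r"
proof -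
  assume a: "a > 1" and r: "0 \<le> r" "r \<le> r'"
  show ?thesis
  proof (cases "r' = \<infinity>")
    case True then show ?thesis using vp_nn by (simp add: vis_pow_def)
  next
    case False
    then have rr: "r \<noteq> \<infinity>" using r by auto
    obtain x where x: "r = ereal x" using rr r(1) by (cases r) auto
    obtain y where y: "r' = ereal y" using False r by (cases r') auto
    have "real_of_ereal r \<le> real_of_ereal r'" using r x y by simp
    then show ?thesis using a False rr unfolding vis_pow_def by (simp add: powr_mono)
  qed
qed

lemma vp_cmp:
  assumes a: "a > 1" and c: "c \<ge> 0" and r: "0 \<le> r" "r \<le> r'" "r' \<le> r + ereal c"
  shows "vis_pow a r \<le> a powr c * vis_pow a r'"
proof (cases "r' = \<infinity>")
  case True
  then have "r = \<infinity>" using r(3) by (cases r) auto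
  then show ?thesis unfolding vis_pow_def by simp
next
  case False
  then have rr: "r \<noteq> \<infinity>" using r by auto
  obtain x where x: "r = ereal x" using rr r(1) by (cases r) auto
  obtain y where y: "r' = ereal y" using False r by (cases r') auto
  have "y \<le> x + c" using r(3) x y by simp
  then have "a powr (- x) \<le> a powr (c + - y)"
    using a by (intro powr_mono) auto
  also have "\<dots> = a powr c * a powr (- y)" by (rule powr_add)
  finally have "a powr (- x) \<le> a powr c * a powr (- y)" .
  then show ?thesis unfolding vis_pow_def using x y by simp
qed

lemma metric_pullback:
  assumes m: "Metric_space B dT" and inj: "inj_on \<phi> A" and im: "\<phi> ` A \<subseteq> B"
  shows "Metric_space A (\<lambda>p q. dT (\<phi> p) (\<phi> q))"
proof
  fix x y show "0 \<le> dT (\<phi> x) (\<phi> y)" using Metric_space.nonneg[OF m] .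
next
  fix x y show "dT (\<phi> x) (\<phi> y) = dT (\<phi> y) (\<phi> x)" using Metric_space.commute[OF m] .
next
  fix x y assume "x \<in> A" "y \<in> A"
  moreover have "\<phi> x \<in> B" "\<phi> y \<in> B" using im \<open>x \<in> A\<close> \<open>y \<in> A\<close> by auto
  ultimately show "dT (\<phi> x) (\<phi> y) = 0 \<longleftrightarrow> x = y" using Metric_space.zero[OF m] inj_on_eq_iff[OF inj] by simp
next
  fix x y z assume "x \<in> A" "y \<in> A" "z \<in> A"
  moreover have "\<phi> x \<in> B" "\<phi> y \<in> B" "\<phi> z \<in> B" using im \<open>x \<in> A\<close> \<open>y \<in> A\<close> \<open>z \<in> A\<close> by auto
  ultimately show "dT (\<phi> x) (\<phi> z) \<le> dT (\<phi> x) (\<phi> y) + dT (\<phi> y) (\<phi> z)"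
    using Metric_space.triangle[OF m] by simp
qed

locale transfer =
  fixes S :: "'a set" and g :: "'a \<Rightarrow> 'a \<Rightarrow> real" and T :: "'t set" and g' :: "'t \<Rightarrow> 't \<Rightarrow> real"
    and h :: "'a \<Rightarrow> 't" and c :: real
  assumes gsym: "\<And>x y. g x y = g y x"
    and g'sym: "\<And>x y. g' x y = g' y x"
    and gnn: "\<And>x y. x \<in> S \<Longrightarrow> y \<in> S \<Longrightarrow> 0 \<le> g x y"
    and hS: "h ` S = T"
    and cmp: "\<And>x y. x \<in> S \<Longrightarrow> y \<in> S \<Longrightarrow> g x y \<le> g' (h x) (h y) \<and> g' (h x) (h y) \<le> g x y + c"
    and hyp0: "\<And>P Q R. P \<in> T \<Longrightarrow> Q \<in> T \<Longrightarrow> R \<in> T \<Longrightarrow> min (g' P Q) (g' Q R) \<le> g' P R"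
    and c0: "c \<ge> 0"
begin

lemma hypS: "x \<in> S \<Longrightarrow> y \<in> S \<Longrightarrow> z \<in> S \<Longrightarrow> min (g x y) (g y z) - c \<le> g x z"
proof -
  assume x: "x \<in> S" and y: "y \<in> S" and z: "z \<in> S"
  have T: "h x \<in> T" "h y \<in> T" "h z \<in> T" using hS x y z by auto
  have "min (g' (h x) (h y)) (g' (h y) (h z)) \<le> g' (h x) (h z)" using hyp0[OF T] .
  then show ?thesis using cmp[OF x y] cmp[OF y z] cmp[OF x z] by linarith
qed

sublocale XS: hypg S g c
  by unfold_locales (use gsym hypS in auto)

sublocale XT: hypg T g' 0
  by unfold_locales (use g'sym hyp0 in auto)

lemma seqT: "\<forall>n. xs n \<in> S \<Longrightarrow> \<forall>n. (h \<circ> xs) n \<in> T" using hS by auto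

lemma geq_tr: "\<forall>n. xs n \<in> S \<Longrightarrow> \<forall>n. ys n \<in> S \<Longrightarrow> geq g xs ys \<Longrightarrow> geq g' (h \<circ> xs) (h \<circ> ys)"
  unfolding geq_def
proof (intro allI)
  fix M assume xs: "\<forall>n. xs n \<in> S" and ys: "\<forall>n. ys n \<in> S"
    and h: "\<forall>M. \<exists>N. \<forall>i\<ge>N. \<forall>j\<ge>N. M \<le> g (xs i) (ys j)"
  obtain N where N: "\<forall>i\<ge>N. \<forall>j\<ge>N. M \<le> g (xs i) (ys j)" using h by blast
  have "M \<le> g' ((h \<circ> xs) i) ((h \<circ> ys) j)" if "i \<ge> N" "j \<ge> N" for i j
  proof -
    have "M \<le> g (xs i) (ys j)" using N that by blast
    also have "\<dots> \<le> g' (h (xs i)) (h (ys j))" using cmp xs ys by blast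
    finally show ?thesis by simp
  qed
  then show "\<exists>N. \<forall>i\<ge>N. \<forall>j\<ge>N. M \<le> g' ((h \<circ> xs) i) ((h \<circ> ys) j)" by blast
qed

lemma geq_back: "\<forall>n. xs n \<in> S \<Longrightarrow> \<forall>n. ys n \<in> S \<Longrightarrow> geq g' (h \<circ> xs) (h \<circ> ys) \<Longrightarrow> geq g xs ys"
  unfolding geq_def
proof (intro allI)
  fix M assume xs: "\<forall>n. xs n \<in> S" and ys: "\<forall>n. ys n \<in> S"
    and h: "\<forall>M. \<exists>N. \<forall>i\<ge>N. \<forall>j\<ge>N. M \<le> g' ((h \<circ> xs) i) ((h \<circ> ys) j)"
  obtain N where "\<forall>i\<ge>N. \<forall>j\<ge>N. M + c \<le> g' ((h \<circ> xs) i) ((h \<circ> ys) j)" using h by blast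
  then have "\<forall>i\<ge>N. \<forall>j\<ge>N. M \<le> g (xs i) (ys j)"
  proof (intro allI impI)
    fix i j assume N: "\<forall>i\<ge>N. \<forall>j\<ge>N. M + c \<le> g' ((h \<circ> xs) i) ((h \<circ> ys) j)" and "N \<le> i" "N \<le> j"
    then have "M + c \<le> g' (h (xs i)) (h (ys j))" by simp
    moreover have "g' (h (xs i)) (h (ys j)) \<le> g (xs i) (ys j) + c" using cmp xs ys by blast
    ultimately show "M \<le> g (xs i) (ys j)" by simp
  qed
  then show "\<exists>N. \<forall>i\<ge>N. \<forall>j\<ge>N. M \<le> g (xs i) (ys j)" by blast
qed

lemma conv_tr: "gconv S g xs \<Longrightarrow> gconv T g' (h \<circ> xs)"
proof -
  assume a: "gconv S g xs"
  then have sx: "\<forall>n. xs n \<in> S" "geq g xs xs" using XS.gconv_alt by auto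
  have "geq g' (h \<circ> xs) (h \<circ> xs)" by (rule geq_tr[OF sx(1) sx(1) sx(2)])
  then show ?thesis using XT.gconv_alt seqT[OF sx(1)] by blast
qed

definition phi :: "(nat \<Rightarrow> 'a) set \<Rightarrow> (nat \<Rightarrow> 't) set" where
  "phi p = gcls T g' (h \<circ> (SOME xs. xs \<in> p))"

lemma phi_rep: "p \<in> gbnd S g \<Longrightarrow> xs \<in> p \<Longrightarrow> phi p = gcls T g' (h \<circ> xs)"
proof -
  assume p: "p \<in> gbnd S g" and xs: "xs \<in> p"
  define xs' where "xs' = (SOME xs. xs \<in> p)"
  have ex: "\<exists>xs. xs \<in> p" using xs by blast
  have xs': "xs' \<in> p" unfolding xs'_def by (rule someI_ex[OF ex])
  have a: "gconv S g xs" "p = gcls S g xs" using XS.bnd_mem[OF p xs] by auto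
  have b: "gconv S g xs'" "p = gcls S g xs'" using XS.bnd_mem[OF p xs'] by auto
  have "gcls S g xs' = gcls S g xs" using a(2) b(2) by simp
  then have e: "geq g xs' xs" using XS.cls_eq[OF b(1) a(1)] by simp
  have s1: "\<forall>n. xs n \<in> S" using a(1) unfolding gconv_def by auto
  have s2: "\<forall>n. xs' n \<in> S" using b(1) unfolding gconv_def by auto
  have "geq g' (h \<circ> xs') (h \<circ> xs)" by (rule geq_tr[OF s2 s1 e])
  then have "gcls T g' (h \<circ> xs') = gcls T g' (h \<circ> xs)"
    using XT.cls_eq[OF conv_tr[OF b(1)] conv_tr[OF a(1)]] by simp
  then show ?thesis unfolding phi_def xs'_def by simp
qed

lemma phi_in: "p \<in> gbnd S g \<Longrightarrow> phi p \<in> gbnd T g'"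
proof -
  assume p: "p \<in> gbnd S g"
  then obtain xs where xs: "xs \<in> p" using XS.bnd_ne by blast
  then have "gconv S g xs" using XS.bnd_mem[OF p] by blast
  then show ?thesis unfolding phi_rep[OF p xs] gbnd_def using conv_tr by blast
qed

lemma phi_inj: "inj_on phi (gbnd S g)"
proof (rule inj_onI)
  fix p q assume p: "p \<in> gbnd S g" and q: "q \<in> gbnd S g" and e: "phi p = phi q"
  obtain xs where xs: "xs \<in> p" using XS.bnd_ne[OF p] by blast
  obtain ys where ys: "ys \<in> q" using XS.bnd_ne[OF q] by blast
  have a: "gconv S g xs" "p = gcls S g xs" using XS.bnd_mem[OF p xs] by auto
  have b: "gconv S g ys" "q = gcls S g ys" using XS.bnd_mem[OF q ys] by auto
  have "gcls T g' (h \<circ> xs) = gcls T g' (h \<circ> ys)" using e phi_rep[OF p xs] phi_rep[OF q ys] by simp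
  then have "geq g' (h \<circ> xs) (h \<circ> ys)" using XT.cls_eq[OF conv_tr[OF a(1)] conv_tr[OF b(1)]] by simp
  moreover have "\<forall>n. xs n \<in> S" "\<forall>n. ys n \<in> S" using a b unfolding gconv_def by auto
  ultimately have "geq g xs ys" using geq_back by blast
  then show "p = q" using XS.cls_eq[OF a(1) b(1)] a b by simp
qed

lemma phi_surj: "phi ` gbnd S g = gbnd T g'"
proof (intro equalityI subsetI)
  fix P assume "P \<in> phi ` gbnd S g" then show "P \<in> gbnd T g'" using phi_in by blast
next
  fix P assume P: "P \<in> gbnd T g'"
  then obtain zs where zs: "gconv T g' zs" "P = gcls T g' zs" unfolding gbnd_def by auto
  define xs where "xs = (\<lambda>n. SOME x. x \<in> S \<and> h x = zs n)"
  have "\<exists>x. x \<in> S \<and> h x = zs n" for n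
  proof -
    have "zs n \<in> h ` S" using zs(1) hS unfolding gconv_def by auto
    then obtain x where "x \<in> S" "zs n = h x" by (rule imageE)
    then show ?thesis by auto
  qed
  then have xs: "xs n \<in> S \<and> h (xs n) = zs n" for n unfolding xs_def by (rule someI_ex[where P="\<lambda>x. x \<in> S \<and> h x = zs n"])
  have hz: "h \<circ> xs = zs" by (rule ext) (simp add: xs)
  have sx: "\<forall>n. xs n \<in> S" using xs by blast
  have "geq g' zs zs" using zs(1) unfolding gconv_def geq_def by simp
  then have "geq g' (h \<circ> xs) (h \<circ> xs)" using hz by simp
  then have "geq g xs xs" by (rule geq_back[OF sx sx])
  then have cx: "gconv S g xs" unfolding gconv_def geq_def using sx by simp
  have "gcls S g xs \<in> gbnd S g" unfolding gbnd_def using cx by blast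
  moreover have "phi (gcls S g xs) = P"
    using phi_rep[OF \<open>gcls S g xs \<in> gbnd S g\<close> XS.cls_self[OF cx]] zs(2) hz by simp
  ultimately show "P \<in> phi ` gbnd S g" by blast
qed

lemma phi_bij: "bij_betw phi (gbnd S g) (gbnd T g')"
  unfolding bij_betw_def using phi_inj phi_surj by blast

lemma bpT_eq:
  assumes P: "P \<in> gbnd T g'" and Q: "Q \<in> gbnd T g'" and xs: "xs \<in> P" and ys: "ys \<in> Q"
  shows "gbp g' P Q = LL g' xs ys"
proof -
  have cx: "gconv T g' xs" and Pe: "P = gcls T g' xs" using XT.bnd_mem[OF P xs] by blast+
  have cy: "gconv T g' ys" and Qe: "Q = gcls T g' ys" using XT.bnd_mem[OF Q ys] by blast+
  have "{LL g' xs' ys' | xs' ys'. xs' \<in> P \<and> ys' \<in> Q} = {LL g' xs ys}"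
  proof (intro equalityI subsetI)
    fix v assume "v \<in> {LL g' xs' ys' | xs' ys'. xs' \<in> P \<and> ys' \<in> Q}"
    then obtain xs' ys' where v: "v = LL g' xs' ys'" "xs' \<in> P" "ys' \<in> Q" by blast
    have c1: "gconv T g' xs'" and e1: "geq g' xs xs'" using v(2) unfolding Pe gcls_def by auto
    have c2: "gconv T g' ys'" and e2: "geq g' ys ys'" using v(3) unfolding Qe gcls_def by auto
    have s1: "\<forall>n. xs n \<in> T" using cx unfolding gconv_def by auto
    have s2: "\<forall>n. ys n \<in> T" using cy unfolding gconv_def by auto
    have s3: "\<forall>n. xs' n \<in> T" using c1 unfolding gconv_def by auto
    have s4: "\<forall>n. ys' n \<in> T" using c2 unfolding gconv_def by auto
    have "LL g' xs ys = LL g' xs' ys'"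
      by (rule LL_equiv2[OF hyp0 g'sym s1 s3 s2 s4 e1 e2])
    then show "v \<in> {LL g' xs ys}" using v by simp
  next
    fix v assume "v \<in> {LL g' xs ys}"
    then show "v \<in> {LL g' xs' ys' | xs' ys'. xs' \<in> P \<and> ys' \<in> Q}" using xs ys by blast
  qed
  then show ?thesis unfolding gbp_def by simp
qed

lemma bp_lower: "p \<in> gbnd S g \<Longrightarrow> q \<in> gbnd S g \<Longrightarrow> gbp g p q \<le> gbp g' (phi p) (phi q)"
proof -
  assume p: "p \<in> gbnd S g" and q: "q \<in> gbnd S g"
  show ?thesis unfolding gbp_def[of g]
  proof (rule Sup_least)
    fix v assume "v \<in> {LL g xs ys | xs ys. xs \<in> p \<and> ys \<in> q}"
    then obtain xs ys where v: "v = LL g xs ys" "xs \<in> p" "ys \<in> q" by blast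
    have a: "gconv S g xs" and b: "gconv S g ys" using XS.bnd_mem p q v by blast+
    have "v \<le> LL g' (h \<circ> xs) (h \<circ> ys)" unfolding v(1)
      by (rule LL_mono) (use cmp a b in \<open>auto simp: gconv_def\<close>)
    also have "\<dots> = gbp g' (phi p) (phi q)"
    proof -
      have "h \<circ> xs \<in> phi p" unfolding phi_rep[OF p v(2)] by (rule XT.cls_self[OF conv_tr[OF a]])
      moreover have "h \<circ> ys \<in> phi q" unfolding phi_rep[OF q v(3)] by (rule XT.cls_self[OF conv_tr[OF b]])
      ultimately show ?thesis using bpT_eq[OF phi_in[OF p] phi_in[OF q]] by simp
    qed
    finally show "v \<le> gbp g' (phi p) (phi q)" .
  qed
qed

lemma bp_upper: "p \<in> gbnd S g \<Longrightarrow> q \<in> gbnd S g \<Longrightarrow> gbp g' (phi p) (phi q) \<le> gbp g p q + ereal c"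
proof -
  assume p: "p \<in> gbnd S g" and q: "q \<in> gbnd S g"
  obtain xs where xs: "xs \<in> p" using XS.bnd_ne[OF p] by blast
  obtain ys where ys: "ys \<in> q" using XS.bnd_ne[OF q] by blast
  have a: "gconv S g xs" and b: "gconv S g ys" using XS.bnd_mem p q xs ys by blast+
  have "gbp g' (phi p) (phi q) = LL g' (h \<circ> xs) (h \<circ> ys)"
  proof -
    have "h \<circ> xs \<in> phi p" unfolding phi_rep[OF p xs] by (rule XT.cls_self[OF conv_tr[OF a]])
    moreover have "h \<circ> ys \<in> phi q" unfolding phi_rep[OF q ys] by (rule XT.cls_self[OF conv_tr[OF b]])
    ultimately show ?thesis using bpT_eq[OF phi_in[OF p] phi_in[OF q]] by simp
  qed
  also have "\<dots> \<le> LL g xs ys + ereal c"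
    by (rule LL_plus) (use cmp a b in \<open>auto simp: gconv_def\<close>)
  also have "LL g xs ys \<le> gbp g p q" unfolding gbp_def using xs ys by (intro Sup_upper) blast
  then have "LL g xs ys + ereal c \<le> gbp g p q + ereal c" by (rule add_right_mono)
  finally show ?thesis .
qed

lemma bpS_nn: "p \<in> gbnd S g \<Longrightarrow> q \<in> gbnd S g \<Longrightarrow> 0 \<le> gbp g p q"
proof -
  assume p: "p \<in> gbnd S g" and q: "q \<in> gbnd S g"
  obtain xs where xs: "xs \<in> p" using XS.bnd_ne[OF p] by blast
  obtain ys where ys: "ys \<in> q" using XS.bnd_ne[OF q] by blast
  have a: "gconv S g xs" and b: "gconv S g ys" using XS.bnd_mem p q xs ys by blast+
  have "0 \<le> LL g xs ys" by (rule LL_nn) (use gnn a b in \<open>auto simp: gconv_def\<close>)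
  also have "LL g xs ys \<le> gbp g p q" unfolding gbp_def using xs ys by (intro Sup_upper) blast
  finally show ?thesis .
qed

lemma bpT_sym: "gbp g' P Q = gbp g' Q P"
proof -
  have "{LL g' xs ys | xs ys. xs \<in> P \<and> ys \<in> Q} = {LL g' xs ys | xs ys. xs \<in> Q \<and> ys \<in> P}"
    using LL_sym[of g', OF g'sym] by blast
  then show ?thesis unfolding gbp_def by simp
qed

lemma bpT_props:
  assumes P: "P \<in> gbnd T g'" and Q: "Q \<in> gbnd T g'"
  shows "0 \<le> gbp g' P Q" "gbp g' P Q = \<infinity> \<longleftrightarrow> P = Q"
proof -
  obtain xs where xs: "xs \<in> P" using XT.bnd_ne[OF P] by blast
  obtain ys where ys: "ys \<in> Q" using XT.bnd_ne[OF Q] by blast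
  have a: "gconv T g' xs" "P = gcls T g' xs" and b: "gconv T g' ys" "Q = gcls T g' ys"
    using XT.bnd_mem P Q xs ys by blast+
  have e: "gbp g' P Q = LL g' xs ys" by (rule bpT_eq[OF P Q xs ys])
  have "\<forall>n. xs n \<in> T" "\<forall>n. ys n \<in> T" using a b unfolding gconv_def by auto
  have "0 \<le> g' (xs i) (ys j)" for i j
  proof -
    have "xs i \<in> h ` S" "ys j \<in> h ` S" using hS \<open>\<forall>n. xs n \<in> T\<close> \<open>\<forall>n. ys n \<in> T\<close> by auto
    then obtain x y where xy: "x \<in> S" "y \<in> S" "xs i = h x" "ys j = h y" by blast
    have "0 \<le> g x y" using gnn xy by blast
    also have "g x y \<le> g' (h x) (h y)" using cmp xy by blast
    finally show ?thesis using xy by simp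
  qed
  then show "0 \<le> gbp g' P Q" unfolding e by (intro LL_nn)
  show "gbp g' P Q = \<infinity> \<longleftrightarrow> P = Q" unfolding e LL_inf using XT.cls_eq a b by simp
qed

lemma bpT_ultra:
  assumes P: "P \<in> gbnd T g'" and Q: "Q \<in> gbnd T g'" and R: "R \<in> gbnd T g'"
  shows "min (gbp g' P Q) (gbp g' Q R) \<le> gbp g' P R"
proof -
  obtain xs where xs: "xs \<in> P" using XT.bnd_ne[OF P] by blast
  obtain ys where ys: "ys \<in> Q" using XT.bnd_ne[OF Q] by blast
  obtain zs where zs: "zs \<in> R" using XT.bnd_ne[OF R] by blast
  have "gconv T g' xs" "gconv T g' ys" "gconv T g' zs" using XT.bnd_mem P Q R xs ys zs by blast+
  then have "min (LL g' xs ys) (LL g' ys zs) \<le> LL g' xs zs"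
    by (intro LL_4pt) (use hyp0 in \<open>auto simp: gconv_def\<close>)
  then show ?thesis using bpT_eq[OF P Q xs ys] bpT_eq[OF Q R ys zs] bpT_eq[OF P R xs zs] by simp
qed

lemma metricT: "a > 1 \<Longrightarrow> Metric_space (gbnd T g') (\<lambda>P Q. vis_pow a (gbp g' P Q))"
proof
  fix P Q show "0 \<le> vis_pow a (gbp g' P Q)" by (rule vp_nn)
next
  fix P Q show "vis_pow a (gbp g' P Q) = vis_pow a (gbp g' Q P)" using bpT_sym by simp
next
  fix P Q assume "a > 1" "P \<in> gbnd T g'" "Q \<in> gbnd T g'"
  then show "vis_pow a (gbp g' P Q) = 0 \<longleftrightarrow> P = Q" using vp_zero bpT_props by simp
next
  fix P Q R assume a: "a > 1" and PQR: "P \<in> gbnd T g'" "Q \<in> gbnd T g'" "R \<in> gbnd T g'"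
  have m: "min (gbp g' P Q) (gbp g' Q R) \<le> gbp g' P R" by (rule bpT_ultra[OF PQR])
  have n: "0 \<le> gbp g' P Q" "0 \<le> gbp g' Q R" using bpT_props PQR by auto
  show "vis_pow a (gbp g' P R) \<le> vis_pow a (gbp g' P Q) + vis_pow a (gbp g' Q R)"
  proof (cases "gbp g' P Q \<le> gbp g' Q R")
    case True
    then have "vis_pow a (gbp g' P R) \<le> vis_pow a (gbp g' P Q)"
      using m n a by (intro vp_anti) (auto simp: min_def)
    then show ?thesis using vp_nn[of a "gbp g' Q R"] by linarith
  next
    case False
    then have "vis_pow a (gbp g' P R) \<le> vis_pow a (gbp g' Q R)"
      using m n a by (intro vp_anti) (auto simp: min_def)
    then show ?thesis using vp_nn[of a "gbp g' P Q"] by linarith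
  qed
qed

end



lemma conv_eq: "conv_infty S d w = gconv S (gromov_product d w)"
  unfolding conv_infty_def gconv_def by (intro ext) simp

lemma equiv_eq: "seq_equiv d w = geq (gromov_product d w)"
  unfolding seq_equiv_def using LL_inf unfolding LL_def by (intro ext) blast

lemma sb_eq: "seq_boundary S d w = gbnd S (gromov_product d w)"
  unfolding seq_boundary_def gbnd_def gcls_def conv_eq equiv_eq by simp

lemma bp_eq: "boundary_product d w = gbp (gromov_product d w)"
  unfolding boundary_product_def gbp_def LL_def by (intro ext) simp

lemma Dl_nn:
  assumes "Metric_space X d" "geodesic_space X d" "simplicial_tree V E"
    "f ` X \<subseteq> V" "1 \<le> lam" "0 \<le> C"
    "\<And>x y. x \<in> X \<Longrightarrow> y \<in> X \<Longrightarrow> d x y / lam - C \<le> graph_dist E (f x) (f y) \<and>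
                graph_dist E (f x) (f y) \<le> lam * d x y + C"
  shows "0 \<le> Dl lam C"
proof -
  have J: "0 \<le> J lam C" using J_def[OF assms] assms(5,6) by simp
  have "0 \<le> lam^2 * (2 * J lam C + C) / 2" using J assms(6) by simp
  then have "0 \<le> D0 lam C" using D0_def[OF assms] J assms(6) by simp
  then show ?thesis using Dl_def[OF assms] J assms(5,6) by simp
qed

theorem corollary6p36:
  fixes X :: "'a set" and d :: "'a \<Rightarrow> 'a \<Rightarrow> real" and x0 :: 'a
    and V :: "'b set" and E :: "'b \<Rightarrow> 'b \<Rightarrow> bool"
  assumes "Metric_space X d" and "geodesic_space X d"
    and "simplicial_tree V E" and "quasi_isometric X d V (graph_dist E)"
    and "x0 \<in> X"
  shows "\<forall>a::real. a > 1 \<longrightarrow> (\<exists>dB. visual_metric X d x0 a dB \<and>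
           isometric_spaces (seq_boundary X d x0) dB
             (seq_boundary (ea_tree X d x0) (ea_metric X d x0) (ea_class X d x0 x0))
             (\<lambda>p q. vis_pow a (boundary_product (ea_metric X d x0) (ea_class X d x0 x0) p q)))"
proof -
  note ms = assms(1) and gs = assms(2) and tree = assms(3) and x0 = assms(5)
  obtain f lam C where fX: "f ` X \<subseteq> V" and lam: "lam \<ge> 1" and C: "C \<ge> 0"
    and qi: "\<And>x y. x \<in> X \<Longrightarrow> y \<in> X \<Longrightarrow> d x y / lam - C \<le> graph_dist E (f x) (f y) \<and>
                graph_dist E (f x) (f y) \<le> lam * d x y + C"
    using assms(4) unfolding quasi_isometric_def by blast
  define c where "c = 3 * Dl lam C"
  have c0: "0 \<le> c" unfolding c_def using Dl_nn[OF ms gs tree fX lam C qi] by simp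
  define g where "g = gromov_product d x0"
  define g' where "g' = gromov_product (ea_metric X d x0) (ea_class X d x0 x0)"
  define h where "h = ea_class X d x0"
  define T where "T = ea_tree X d x0"
  have chain_bound: "chain_product X d x0 x y \<le> g x y + c" if x: "x \<in> X" and y: "y \<in> X" for x y
  proof -
    have "Sup (cset X d x0 x y) \<le> g x y + c"
    proof (rule cSup_least)
      show "cset X d x0 x y \<noteq> {}" using cset_in[OF ms x0 x y] by blast
    next
      fix v assume "v \<in> cset X d x0 x y"
      then obtain xs where xs: "v = cval d x0 xs" "length xs \<ge> 2" "hd xs = x" "last xs = y" "set xs \<subseteq> X"
        unfolding cset_def[OF ms x0] by blast
      obtain i where i: "i < length xs - 1" "gromov_product d x0 (xs!i) (xs!Suc i) \<le> gromov_product d x0 (hd xs) (last xs) + 3 * Dl lam C"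
        using main_chain[OF ms gs tree fX lam C qi x0 xs(2,5)] by blast
      have "v \<le> gromov_product d x0 (xs!i) (xs!Suc i)" using cval_le[OF ms x0 xs(2) i(1)] xs(1) by simp
      then show "v \<le> g x y + c" using i(2) xs unfolding g_def c_def by simp
    qed
    then show ?thesis using chain_def'[OF ms x0] by simp
  qed
  interpret TR: transfer X g T g' h c
  proof
    fix x y show "g x y = g y x" unfolding g_def by (rule gp_sym[OF ms x0])
  next
    fix x y show "g' x y = g' y x" unfolding g'_def by (rule gpT_sym[OF ms x0])
  next
    fix x y assume "x \<in> X" "y \<in> X" then show "0 \<le> g x y" unfolding g_def by (rule gp_nn[OF ms x0])
  next
    show "h ` X = T" unfolding h_def T_def ea_tree_def ..
  next
    fix x y assume x: "x \<in> X" and y: "y \<in> X"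
    have e: "g' (h x) (h y) = chain_product X d x0 x y" unfolding g'_def h_def by (rule gpT_cls[OF ms x0 x y])
    show "g x y \<le> g' (h x) (h y) \<and> g' (h x) (h y) \<le> g x y + c"
      unfolding e using chain_ge[OF ms x0 x y] chain_bound[OF x y] unfolding g_def by simp
  next
    fix P Q R assume "P \<in> T" "Q \<in> T" "R \<in> T"
    then obtain x y z where xyz: "x \<in> X" "y \<in> X" "z \<in> X" "P = h x" "Q = h y" "R = h z"
      unfolding T_def ea_tree_def h_def by (auto elim!: imageE)
    show "min (g' P Q) (g' Q R) \<le> g' P R"
      unfolding xyz(4-6) g'_def h_def gpT_cls[OF ms x0 xyz(1,2)] gpT_cls[OF ms x0 xyz(2,3)] gpT_cls[OF ms x0 xyz(1,3)]
      by (rule chain_min[OF ms x0 xyz(1-3)])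
  next
    show "0 \<le> c" by (rule c0)
  qed
  show ?thesis
  proof (intro allI impI)
    fix a :: real assume a: "a > 1"
    define dB where "dB = (\<lambda>p q. vis_pow a (gbp g' (TR.phi p) (TR.phi q)))"
    have sbX: "seq_boundary X d x0 = gbnd X g" unfolding g_def by (rule sb_eq)
    have sbT: "seq_boundary (ea_tree X d x0) (ea_metric X d x0) (ea_class X d x0 x0) = gbnd T g'"
      unfolding g'_def T_def by (rule sb_eq)
    have bpX: "boundary_product d x0 = gbp g" unfolding g_def by (rule bp_eq)
    have bpT: "boundary_product (ea_metric X d x0) (ea_class X d x0 x0) = gbp g'" unfolding g'_def by (rule bp_eq)
    have ms_dB: "Metric_space (gbnd X g) dB"
      unfolding dB_def
      by (rule metric_pullback[OF TR.metricT[OF a] TR.phi_inj]) (use TR.phi_in in blast)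
    define K where "K = a powr c"
    have K1: "K \<ge> 1" unfolding K_def using a c0 by (simp add: ge_one_powr_ge_zero)
    have bounds: "vis_pow a (gbp g p q) / K \<le> dB p q \<and> dB p q \<le> K * vis_pow a (gbp g p q)"
      if p: "p \<in> gbnd X g" and q: "q \<in> gbnd X g" for p q
    proof -
      have r0: "0 \<le> gbp g p q" by (rule TR.bpS_nn[OF p q])
      have r1: "gbp g p q \<le> gbp g' (TR.phi p) (TR.phi q)" by (rule TR.bp_lower[OF p q])
      have r2: "gbp g' (TR.phi p) (TR.phi q) \<le> gbp g p q + ereal c" by (rule TR.bp_upper[OF p q])
      have "vis_pow a (gbp g p q) \<le> K * dB p q"
        unfolding dB_def K_def by (rule vp_cmp[OF a c0 r0 r1 r2])
      then have A: "vis_pow a (gbp g p q) / K \<le> dB p q" using K1 by (simp add: field_simps)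
      have "dB p q \<le> vis_pow a (gbp g p q)" unfolding dB_def by (rule vp_anti[OF a r0 r1])
      also have "\<dots> \<le> K * vis_pow a (gbp g p q)" using K1 vp_nn[of a "gbp g p q"]
        by (simp add: mult_le_cancel_right1)
      finally show ?thesis using A by simp
    qed
    have "visual_metric X d x0 a dB"
      unfolding visual_metric_def sbX bpX using ms_dB bounds K1 by blast
    moreover have "isometric_spaces (seq_boundary X d x0) dB
             (seq_boundary (ea_tree X d x0) (ea_metric X d x0) (ea_class X d x0 x0))
             (\<lambda>p q. vis_pow a (boundary_product (ea_metric X d x0) (ea_class X d x0 x0) p q))"
      unfolding isometric_spaces_def sbX sbT bpT dB_def using TR.phi_bij by blast
    ultimately show "\<exists>dB. visual_metric X d x0 a dB \<and>
           isometric_spaces (seq_boundary X d x0) dB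
             (seq_boundary (ea_tree X d x0) (ea_metric X d x0) (ea_class X d x0 x0))
             (\<lambda>p q. vis_pow a (boundary_product (ea_metric X d x0) (ea_class X d x0 x0) p q))" by blast
  qed
qed


end
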